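(* Let $k\ge 1$, $n\ge 100k$ and $3\le r\le 10k$ be integers. If $G\in\mathcal{G}^*_{n,r}$, then \[ \lambda(G)\le \lambda(T_{n-r+2,2}\circ K_{r-1}), \] with equality if and only if $G=T_{n-r+2,2}\circ K_{r-1}$ (up to isomorphism).
   Context: $\lambda(G)$ denotes the spectral radius of the adjacency matrix of $G$. $T_{m,2}$ denotes the complete bipartite graph on $m$ vertices with parts of sizes $\lfloor m/2\rfloor$ and $\lceil m/2\rceil$. $T_{n-r+2,2}\circ K_{r-1}$ is the $n$-vertex graph obtained by identifying a vertex of the complete graph $K_{r-1}$ with a vertex of the smaller part (of size $\lfloor (n-r+2)/2\rfloor$) of $T_{n-r+2,2}$. A graph $H$ is suspended on a graph $B$ if $H$ intersects $B$ in exactly one vertex. $\mathcal{G}^*_{n,r}$ is the family of $n$-vertex graphs obtained from a bipartite graph $B$ by suspending graphs $G_1,\dots,G_s$ on $B$ (for some $s\in\mathbb{N}$), i.e. the graph is $B\cup G_1\cup\dots\cup G_s$ with each $G_i$ meeting $B$ in exactly one vertex, where $\sum_{i=1}^s|V(G_i)\setminus V(B)|= r-2$. *)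

theory Defs
  imports Jordan_Normal_Form.Spectral_Radius
begin

definition graph_on :: "nat set \<Rightarrow> nat set set \<Rightarrow> bool" where
  "graph_on V E \<longleftrightarrow> finite V \<and>
     (\<forall>e\<in>E. \<exists>u v. e = {u, v} \<and> u \<noteq> v \<and> u \<in> V \<and> v \<in> V)"

definition bipartite :: "nat set \<Rightarrow> nat set set \<Rightarrow> bool" where
  "bipartite V E \<longleftrightarrow> (\<exists>X. X \<subseteq> V \<and> (\<forall>e\<in>E. card (e \<inter> X) = 1))"

definition adj_mat :: "nat \<Rightarrow> nat set set \<Rightarrow> complex mat" where
  "adj_mat n E = mat n n (\<lambda>(i, j). if {i, j} \<in> E then 1 else 0)"

definition lambda_G :: "nat \<Rightarrow> nat set set \<Rightarrow> real" where
  "lambda_G n E = spectral_radius (adj_mat n E)"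

definition graph_iso :: "nat \<Rightarrow> nat set set \<Rightarrow> nat set set \<Rightarrow> bool" where
  "graph_iso n E F \<longleftrightarrow> (\<exists>f. bij_betw f {0..<n} {0..<n} \<and>
     (\<forall>u\<in>{0..<n}. \<forall>v\<in>{0..<n}. {u, v} \<in> E \<longleftrightarrow> {f u, f v} \<in> F))"

text \<open>T_{n-r+2,2} o K_{r-1} on vertex set {0..<n}: with m = n-r+2, the smaller
  part is {0..<m div 2}, the larger part {m div 2..<m}; the clique K_{r-1}
  is on {0} \<union> {m..<n} (vertex 0 lies in the smaller part).\<close>
definition TK :: "nat \<Rightarrow> nat \<Rightarrow> nat set set" where
  "TK n r = (let m = n - r + 2; a = m div 2 in
     {{x, y} | x y. x < a \<and> a \<le> y \<and> y < m} \<union>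
     {{x, y} | x y. x \<in> insert 0 {m..<n} \<and> y \<in> insert 0 {m..<n} \<and> x \<noteq> y})"

definition G_star :: "nat \<Rightarrow> nat \<Rightarrow> nat set set \<Rightarrow> bool" where
  "G_star n r E \<longleftrightarrow> graph_on {0..<n} E \<and>
     (\<exists>VB EB (s::nat) (VG :: nat \<Rightarrow> nat set) (EG :: nat \<Rightarrow> nat set set).
        graph_on VB EB \<and> bipartite VB EB \<and>
        (\<forall>i<s. graph_on (VG i) (EG i) \<and> card (VG i \<inter> VB) = 1) \<and>
        (\<forall>i<s. \<forall>j<s. i \<noteq> j \<longrightarrow> (VG i - VB) \<inter> (VG j - VB) = {}) \<and>
        {0..<n} = VB \<union> (\<Union>i<s. VG i) \<and>
        E = EB \<union> (\<Union>i<s. EG i) \<and>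
        (\<Sum>i<s. card (VG i - VB)) = r - 2)"

end

theory Submission
  imports Defs
begin

definition nbr :: "nat \<Rightarrow> nat set set \<Rightarrow> nat \<Rightarrow> nat set" where
  "nbr n E i = {j. j < n \<and> {i,j} \<in> E}"

lemma adj_mat_carrier: "adj_mat n E \<in> carrier_mat n n"
  unfolding adj_mat_def by auto

lemma adj_mult_index:
  assumes "i < n" "v \<in> carrier_vec n"
  shows "(adj_mat n E *\<^sub>v v) $ i = (\<Sum>j\<in>nbr n E i. v $ j)"
proof -
  have "(adj_mat n E *\<^sub>v v) $ i = (\<Sum>j\<in>{0..<n}. (if {i,j}\<in>E then 1 else 0) * v $ j)"
    using assms by (simp add: adj_mat_def scalar_prod_def)
  also have "\<dots> = (\<Sum>j\<in>{0..<n}. if {i,j}\<in>E then v $ j else 0)"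
    by (rule sum.cong) auto
  also have "\<dots> = (\<Sum>j\<in>{j\<in>{0..<n}. {i,j}\<in>E}. v $ j)"
    by (rule sum.inter_filter[symmetric]) simp
  also have "{j\<in>{0..<n}. {i,j}\<in>E} = nbr n E i" unfolding nbr_def by auto
  finally show ?thesis .
qed

lemma finite_nbr[simp]: "finite (nbr n E i)" unfolding nbr_def by auto

lemma cw_bound:
  fixes y :: "nat \<Rightarrow> real" and \<mu> :: real
  assumes n: "n > 0" and sub: "EG \<subseteq> EH" and ypos: "\<And>i. i < n \<Longrightarrow> y i > 0"
    and rows: "\<And>i. i < n \<Longrightarrow> (\<Sum>j\<in>nbr n EH i. y j) \<le> \<mu> * y i"
  shows "lambda_G n EG \<le> \<mu> \<and> (lambda_G n EG = \<mu> \<longrightarrow>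
     (\<exists>M. M \<noteq> {} \<and> M \<subseteq> {0..<n} \<and> (\<forall>i\<in>M. (\<Sum>j\<in>nbr n EH i. y j) = \<mu> * y i \<and>
          nbr n EH i \<subseteq> M \<and> nbr n EH i \<subseteq> nbr n EG i)))"
proof -
  let ?A = "adj_mat n EG"
  have A: "?A \<in> carrier_mat n n" by (rule adj_mat_carrier)
  from spectral_radius_mem_max(1)[OF A n] obtain ev where ev: "ev \<in> spectrum ?A"
    and lam: "lambda_G n EG = cmod ev" unfolding lambda_G_def by auto
  from ev obtain v where v: "v \<in> carrier_vec n" "v \<noteq> 0\<^sub>v n" "?A *\<^sub>v v = ev \<cdot>\<^sub>v v"
    unfolding spectrum_def eigenvalue_def eigenvector_def using A by auto
  define x where "x j = cmod (v $ j)" for j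
  have "\<exists>j<n. v $ j \<noteq> 0"
  proof (rule ccontr)
    assume "\<not> ?thesis"
    hence "v = 0\<^sub>v n" using v(1) by (intro eq_vecI) auto
    thus False using v(2) by simp
  qed
  then obtain j0 where j0: "j0 < n" "x j0 > 0" unfolding x_def by auto
  have key: "cmod ev * x i \<le> (\<Sum>j\<in>nbr n EG i. x j)" if i: "i < n" for i
  proof -
    have "(?A *\<^sub>v v) $ i = ev * v $ i" using v i by simp
    hence "ev * v $ i = (\<Sum>j\<in>nbr n EG i. v $ j)" using adj_mult_index[OF i v(1)] by simp
    hence "cmod (ev * v $ i) = cmod (\<Sum>j\<in>nbr n EG i. v $ j)" by simp
    also have "\<dots> \<le> (\<Sum>j\<in>nbr n EG i. x j)" unfolding x_def by (rule norm_sum)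
    finally show ?thesis by (simp add: x_def norm_mult)
  qed
  define R where "R = Max ((\<lambda>j. x j / y j) ` {0..<n})"
  define M where "M = {i. i < n \<and> x i / y i = R}"
  have Rge: "x j / y j \<le> R" if "j < n" for j unfolding R_def using that by (intro Max_ge) auto
  have "R \<in> (\<lambda>j. x j / y j) ` {0..<n}" unfolding R_def using n by (intro Max_in) auto
  hence Mne: "M \<noteq> {}" unfolding M_def by auto
  have Rpos: "R > 0" using Rge[OF j0(1)] j0 ypos[OF j0(1)] by (smt (verit) divide_pos_pos)
  have xle: "x j \<le> R * y j" if "j < n" for j using Rge[OF that] ypos[OF that]
    by (simp add: pos_divide_le_eq mult.commute)
  have M_x: "x i = R * y i" if "i \<in> M" for i
  proof -
    have "i < n" "x i / y i = R" using that unfolding M_def by auto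
    thus ?thesis using ypos[of i] by (simp add: divide_eq_eq)
  qed
  have nsub: "nbr n EG i \<subseteq> nbr n EH i" for i using sub unfolding nbr_def by auto
  have chain: "cmod ev * (R * y i) \<le> (\<Sum>j\<in>nbr n EG i. x j)"
    and c2: "(\<Sum>j\<in>nbr n EG i. x j) \<le> (\<Sum>j\<in>nbr n EG i. R * y j)"
    and c3: "(\<Sum>j\<in>nbr n EG i. R * y j) \<le> (\<Sum>j\<in>nbr n EH i. R * y j)"
    and c4: "(\<Sum>j\<in>nbr n EH i. R * y j) \<le> R * (\<mu> * y i)"
    if iM: "i \<in> M" for i
  proof -
    have i: "i < n" using iM unfolding M_def by auto
    show "cmod ev * (R * y i) \<le> (\<Sum>j\<in>nbr n EG i. x j)" using key[OF i] M_x[OF iM] by simp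
    show "(\<Sum>j\<in>nbr n EG i. x j) \<le> (\<Sum>j\<in>nbr n EG i. R * y j)"
      by (rule sum_mono) (use xle in \<open>auto simp: nbr_def\<close>)
    show "(\<Sum>j\<in>nbr n EG i. R * y j) \<le> (\<Sum>j\<in>nbr n EH i. R * y j)"
      by (rule sum_mono2) (use nsub Rpos ypos in \<open>auto simp: nbr_def intro!: mult_nonneg_nonneg less_imp_le\<close>)
    show "(\<Sum>j\<in>nbr n EH i. R * y j) \<le> R * (\<mu> * y i)"
      using rows[OF i] Rpos by (simp add: sum_distrib_left[symmetric])
  qed
  obtain i0 where i0: "i0 \<in> M" using Mne by auto
  have i0n: "i0 < n" using i0 unfolding M_def by auto
  have le: "cmod ev \<le> \<mu>"
  proof -
    have "cmod ev * (R * y i0) \<le> \<mu> * (R * y i0)"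
      using chain[OF i0] c2[OF i0] c3[OF i0] c4[OF i0] by (simp add: algebra_simps)
    thus ?thesis using Rpos ypos[OF i0n] by simp
  qed
  moreover have "\<exists>M. M \<noteq> {} \<and> M \<subseteq> {0..<n} \<and> (\<forall>i\<in>M. (\<Sum>j\<in>nbr n EH i. y j) = \<mu> * y i \<and>
          nbr n EH i \<subseteq> M \<and> nbr n EH i \<subseteq> nbr n EG i)" if eq: "cmod ev = \<mu>"
  proof (intro exI conjI ballI)
    show "M \<noteq> {}" by (rule Mne)
    show "M \<subseteq> {0..<n}" unfolding M_def by auto
    fix i assume iM: "i \<in> M"
    have i: "i < n" using iM unfolding M_def by auto
    have yi: "y i > 0" using ypos[OF i] .
    have e1: "(\<Sum>j\<in>nbr n EG i. x j) = (\<Sum>j\<in>nbr n EG i. R * y j)"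
     and e2: "(\<Sum>j\<in>nbr n EG i. R * y j) = (\<Sum>j\<in>nbr n EH i. R * y j)"
     and e3: "(\<Sum>j\<in>nbr n EH i. R * y j) = R * (\<mu> * y i)"
      using chain[OF iM] c2[OF iM] c3[OF iM] c4[OF iM] eq by (simp_all add: algebra_simps)
    show "(\<Sum>j\<in>nbr n EH i. y j) = \<mu> * y i"
      using e3 Rpos by (simp add: sum_distrib_left[symmetric])
    have "(\<Sum>j\<in>nbr n EG i. R * y j - x j) = 0" using e1 by (simp add: sum_subtractf)
    hence z: "\<forall>j\<in>nbr n EG i. R * y j - x j = 0"
      by (subst sum_nonneg_eq_0_iff[symmetric]) (use xle in \<open>auto simp: nbr_def\<close>)
    have GM: "nbr n EG i \<subseteq> M"
    proof
      fix j assume j: "j \<in> nbr n EG i"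
      hence jn: "j < n" unfolding nbr_def by auto
      have "x j = R * y j" using z j by auto
      thus "j \<in> M" unfolding M_def using jn ypos[OF jn] by auto
    qed
    have "(\<Sum>j\<in>nbr n EH i - nbr n EG i. R * y j) = 0"
      using e2 nsub[of i] by (simp add: sum_diff)
    hence "\<forall>j\<in>nbr n EH i - nbr n EG i. R * y j = 0"
      by (subst sum_nonneg_eq_0_iff[symmetric]) (use Rpos ypos in \<open>auto simp: nbr_def intro!: mult_nonneg_nonneg less_imp_le\<close>)
    note A = this
    have HG: "nbr n EH i \<subseteq> nbr n EG i"
    proof (rule subsetI, rule ccontr)
      fix j assume j: "j \<in> nbr n EH i"
        and nj: "j \<notin> nbr n EG i"
      have "j < n" using j unfolding nbr_def by auto
      hence "R * y j > 0" using Rpos ypos by simp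
      thus False using A j nj by auto
    qed
    show "nbr n EH i \<subseteq> nbr n EG i" by (rule HG)
    show "nbr n EH i \<subseteq> M" using HG GM by auto
  qed
  ultimately show ?thesis using lam by auto
qed

lemma eig_lower:
  fixes y :: "nat \<Rightarrow> real" and \<mu> :: real
  assumes n: "n > 0" and ypos: "\<And>i. i < n \<Longrightarrow> y i > 0" and mu: "\<mu> \<ge> 0"
    and rows: "\<And>i. i < n \<Longrightarrow> (\<Sum>j\<in>nbr n E i. y j) = \<mu> * y i"
  shows "\<mu> \<le> lambda_G n E"
proof -
  let ?A = "adj_mat n E"
  have A: "?A \<in> carrier_mat n n" by (rule adj_mat_carrier)
  define w where "w = vec n (\<lambda>j. complex_of_real (y j))"
  have w: "w \<in> carrier_vec n" unfolding w_def by simp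
  have "w $ 0 \<noteq> 0" using n ypos[OF n] unfolding w_def by simp
  hence wne: "w \<noteq> 0\<^sub>v n" using n by auto
  have "?A *\<^sub>v w = complex_of_real \<mu> \<cdot>\<^sub>v w"
  proof (rule eq_vecI)
    fix i assume "i < dim_vec (complex_of_real \<mu> \<cdot>\<^sub>v w)"
    hence i: "i < n" using w by simp
    have "(?A *\<^sub>v w) $ i = (\<Sum>j\<in>nbr n E i. w $ j)" by (rule adj_mult_index[OF i w])
    also have "\<dots> = (\<Sum>j\<in>nbr n E i. complex_of_real (y j))"
      by (rule sum.cong) (auto simp: w_def nbr_def)
    also have "\<dots> = complex_of_real (\<Sum>j\<in>nbr n E i. y j)" by simp
    also have "\<dots> = complex_of_real \<mu> * w $ i" using rows[OF i] i by (simp add: w_def)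
    finally show "(?A *\<^sub>v w) $ i = (complex_of_real \<mu> \<cdot>\<^sub>v w) $ i" using i w by simp
  qed (use A w in simp)
  hence "complex_of_real \<mu> \<in> spectrum ?A"
    unfolding spectrum_def eigenvalue_def eigenvector_def using A w wne by auto
  hence "cmod (complex_of_real \<mu>) \<in> cmod ` spectrum ?A" by blast
  hence "cmod (complex_of_real \<mu>) \<le> spectral_radius ?A"
    by (intro spectral_radius_mem_max(2)[OF A n])
  thus ?thesis using mu unfolding lambda_G_def by simp
qed

lemma iso_lower:
  assumes n: "n > 0" and iso: "graph_iso n E F"
  shows "lambda_G n F \<le> lambda_G n E"
proof -
  from iso obtain f where f: "bij_betw f {0..<n} {0..<n}"
    and fe: "\<And>u v. u < n \<Longrightarrow> v < n \<Longrightarrow> {u, v} \<in> E \<longleftrightarrow> {f u, f v} \<in> F"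
    unfolding graph_iso_def by auto
  let ?B = "adj_mat n F" and ?A = "adj_mat n E"
  have A: "?A \<in> carrier_mat n n" and B: "?B \<in> carrier_mat n n" by (rule adj_mat_carrier)+
  from spectral_radius_mem_max(1)[OF B n] obtain ev where ev: "ev \<in> spectrum ?B"
    and lam: "lambda_G n F = cmod ev" unfolding lambda_G_def by auto
  from ev obtain v where v: "v \<in> carrier_vec n" "v \<noteq> 0\<^sub>v n" "?B *\<^sub>v v = ev \<cdot>\<^sub>v v"
    unfolding spectrum_def eigenvalue_def eigenvector_def using B by auto
  define w where "w = vec n (\<lambda>j. v $ f j)"
  have w: "w \<in> carrier_vec n" unfolding w_def by simp
  have fn: "f j < n" if "j < n" for j using f that unfolding bij_betw_def by auto
  have wne: "w \<noteq> 0\<^sub>v n"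
  proof
    assume w0: "w = 0\<^sub>v n"
    have "v = 0\<^sub>v n"
    proof (rule eq_vecI)
      fix i assume "i < dim_vec (0\<^sub>v n :: complex vec)"
      hence i: "i < n" by simp
      have "i \<in> f ` {0..<n}" using f i by (simp add: bij_betw_def)
      then obtain j where j: "j < n" "f j = i" by auto
      have "w $ j = 0" using w0 j by simp
      thus "v $ i = 0\<^sub>v n $ i" using j i unfolding w_def by simp
    qed (use v in simp)
    thus False using v(2) by simp
  qed
  have "?A *\<^sub>v w = ev \<cdot>\<^sub>v w"
  proof (rule eq_vecI)
    fix i assume "i < dim_vec (ev \<cdot>\<^sub>v w)"
    hence i: "i < n" using w by simp
    have "(?A *\<^sub>v w) $ i = (\<Sum>j\<in>nbr n E i. w $ j)" by (rule adj_mult_index[OF i w])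
    also have "\<dots> = (\<Sum>j\<in>nbr n E i. v $ f j)" by (rule sum.cong) (auto simp: w_def nbr_def)
    also have "\<dots> = (\<Sum>j\<in>f ` nbr n E i. v $ j)"
    proof (rule sum.reindex[symmetric, unfolded comp_def])
      show "inj_on f (nbr n E i)" using f unfolding bij_betw_def nbr_def
        by (auto intro: inj_on_subset)
    qed
    also have "f ` nbr n E i = nbr n F (f i)"
    proof
      show "f ` nbr n E i \<subseteq> nbr n F (f i)" using fe i fn unfolding nbr_def by auto
      show "nbr n F (f i) \<subseteq> f ` nbr n E i"
      proof
        fix j assume j: "j \<in> nbr n F (f i)"
        have "j \<in> f ` {0..<n}" using f j by (simp add: bij_betw_def nbr_def)
        then obtain j' where j': "j' < n" "f j' = j" by auto
        thus "j \<in> f ` nbr n E i" using j fe[OF i j'(1)] unfolding nbr_def by auto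
      qed
    qed
    also have "(\<Sum>j\<in>nbr n F (f i). v $ j) = (?B *\<^sub>v v) $ f i"
      by (rule adj_mult_index[OF fn[OF i] v(1), symmetric])
    also have "\<dots> = ev * w $ i" using v fn[OF i] i by (simp add: w_def)
    finally show "(?A *\<^sub>v w) $ i = (ev \<cdot>\<^sub>v w) $ i" using i w by simp
  qed (use A w in simp)
  hence "ev \<in> spectrum ?A"
    unfolding spectrum_def eigenvalue_def eigenvector_def using A w wne by auto
  hence "cmod ev \<le> spectral_radius ?A"
    by (intro spectral_radius_mem_max(2)[OF A n]) auto
  thus ?thesis using lam unfolding lambda_G_def by simp
qed

definition Hedges :: "nat set \<Rightarrow> nat set \<Rightarrow> nat set \<Rightarrow> (nat \<Rightarrow> nat) \<Rightarrow> nat set set" where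
  "Hedges P Q K ow = {{x,y}|x y. x\<in>P \<and> y\<in>Q} \<union> {{ow c, c}|c. c\<in>K} \<union>
     {{c,d}|c d. c\<in>K \<and> d\<in>K \<and> ow c = ow d \<and> c\<noteq>d}"

definition Hstruct :: "nat \<Rightarrow> nat set \<Rightarrow> nat set \<Rightarrow> nat set \<Rightarrow> (nat \<Rightarrow> nat) \<Rightarrow> bool" where
  "Hstruct n P Q K ow \<longleftrightarrow> P \<inter> Q = {} \<and> P \<inter> K = {} \<and> Q \<inter> K = {} \<and> P \<union> Q \<union> K = {0..<n} \<and>
     (\<forall>c\<in>K. ow c \<in> P \<union> Q)"

definition Cl :: "nat set \<Rightarrow> (nat \<Rightarrow> nat) \<Rightarrow> nat \<Rightarrow> nat set" where
  "Cl K ow v = {c\<in>K. ow c = v}"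

definition tt :: "nat set \<Rightarrow> (nat \<Rightarrow> nat) \<Rightarrow> nat \<Rightarrow> nat" where
  "tt K ow v = card (Cl K ow v)"

lemma Hedges_swap: "Hedges Q P K ow = Hedges P Q K ow"
  unfolding Hedges_def by (auto simp: insert_commute)

context
  fixes n P Q K ow
  assumes H: "Hstruct n P Q K ow"
begin

lemma HP: "P \<inter> Q = {}" "P \<inter> K = {}" "Q \<inter> K = {}" "P \<union> Q \<union> K = {0..<n}"
  "\<And>c. c \<in> K \<Longrightarrow> ow c \<in> P \<union> Q"
  using H unfolding Hstruct_def by auto

lemma HPn: "x \<in> P \<Longrightarrow> x < n" "x \<in> Q \<Longrightarrow> x < n" "x \<in> K \<Longrightarrow> x < n"
  using HP(4) by auto

lemma finK: "finite K" "finite P" "finite Q"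
  using HP(4) by (metis finite_Un finite_atLeastLessThan)+

lemma nbr_P: assumes v: "v \<in> P" shows "nbr n (Hedges P Q K ow) v = Q \<union> Cl K ow v"
proof -
  have "{v, j} \<in> Hedges P Q K ow \<longleftrightarrow> j \<in> Q \<or> (j \<in> K \<and> ow j = v)" for j
  proof
    assume "{v, j} \<in> Hedges P Q K ow"
    thus "j \<in> Q \<or> (j \<in> K \<and> ow j = v)" unfolding Hedges_def
      using v HP(1,2,3,5) by (auto simp: doubleton_eq_iff) 
  next
    assume "j \<in> Q \<or> (j \<in> K \<and> ow j = v)"
    thus "{v, j} \<in> Hedges P Q K ow" unfolding Hedges_def using v by auto
  qed
  thus ?thesis unfolding nbr_def Cl_def using HPn by auto
qed

lemma nbr_Q: assumes v: "v \<in> Q" shows "nbr n (Hedges P Q K ow) v = P \<union> Cl K ow v"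
proof -
  have "{v, j} \<in> Hedges P Q K ow \<longleftrightarrow> j \<in> P \<or> (j \<in> K \<and> ow j = v)" for j
  proof
    assume "{v, j} \<in> Hedges P Q K ow"
    thus "j \<in> P \<or> (j \<in> K \<and> ow j = v)" unfolding Hedges_def
      using v HP(1,2,3,5) by (auto simp: doubleton_eq_iff) 
  next
    assume "j \<in> P \<or> (j \<in> K \<and> ow j = v)"
    thus "{v, j} \<in> Hedges P Q K ow" unfolding Hedges_def using v by (auto simp: insert_commute)
  qed
  thus ?thesis unfolding nbr_def Cl_def using HPn by auto
qed

lemma nbr_K: assumes c: "c \<in> K"
  shows "nbr n (Hedges P Q K ow) c = insert (ow c) (Cl K ow (ow c) - {c})"
proof -
  have oc: "ow c \<in> P \<union> Q" using HP(5) c by auto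
  have "{c, j} \<in> Hedges P Q K ow \<longleftrightarrow> j = ow c \<or> (j \<in> K \<and> ow j = ow c \<and> j \<noteq> c)" for j
  proof
    assume "{c, j} \<in> Hedges P Q K ow"
    thus "j = ow c \<or> (j \<in> K \<and> ow j = ow c \<and> j \<noteq> c)" unfolding Hedges_def
      using c HP(1,2,3,5) by (auto simp: doubleton_eq_iff) 
  next
    assume "j = ow c \<or> (j \<in> K \<and> ow j = ow c \<and> j \<noteq> c)"
    thus "{c, j} \<in> Hedges P Q K ow" unfolding Hedges_def using c by (auto simp: insert_commute)
  qed
  thus ?thesis unfolding nbr_def Cl_def using HPn oc by auto
qed

lemma Hedges_nbr: assumes "e \<in> Hedges P Q K ow" shows "\<exists>i j. e = {i,j} \<and> i < n \<and> j < n"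
proof -
  have "\<exists>i j. e = {i,j} \<and> i \<in> P \<union> Q \<union> K \<and> j \<in> P \<union> Q \<union> K"
    using assms HP(5) unfolding Hedges_def by blast
  thus ?thesis using HP(4) by auto
qed

lemma tt_le: "tt K ow v \<le> card K"
  unfolding tt_def Cl_def using finK by (intro card_mono) auto

lemma sum_tt: "(\<Sum>v\<in>P. tt K ow v) + (\<Sum>v\<in>Q. tt K ow v) = card K"
proof -
  have "(\<Sum>v\<in>P \<union> Q. tt K ow v) = (\<Sum>v\<in>P \<union> Q. (\<Sum>c\<in>{c\<in>K. ow c = v}. 1::nat))"
    unfolding tt_def Cl_def by simp
  also have "\<dots> = (\<Sum>c\<in>K. 1)"
    by (rule sum.group) (use finK HP(5) in auto)
  finally show ?thesis using HP(1) finK by (simp add: sum.union_disjoint)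
qed

end

definition uu :: "real \<Rightarrow> nat \<Rightarrow> real" where "uu l s = (l + 1 - s) / ((l + 1) * (l - s))"
definition ww :: "real \<Rightarrow> nat \<Rightarrow> real" where "ww l s = 1 / ((l + 1) * (l - s))"

definition yv :: "real \<Rightarrow> real \<Rightarrow> real \<Rightarrow> nat set \<Rightarrow> nat set \<Rightarrow> nat set \<Rightarrow> (nat \<Rightarrow> nat) \<Rightarrow> nat \<Rightarrow> real" where
  "yv l a b P Q K ow i = (if i \<in> P then a * uu l (tt K ow i) else if i \<in> Q then b * uu l (tt K ow i)
     else (if ow i \<in> P then a else b) * ww l (tt K ow (ow i)))"

lemma uu_pos: "real s < l \<Longrightarrow> uu l s > 0" unfolding uu_def by auto
lemma ww_pos: "real s < l \<Longrightarrow> ww l s > 0" unfolding ww_def by auto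
lemma uu_ww1: assumes "real s < l" shows "l * uu l s - s * ww l s = 1"
proof -
  define D where "D = (l+1)*(l-s)"
  have D: "D \<noteq> 0" using assms unfolding D_def by auto
  have "l * ((l + 1 - s)/D) - s * (1/D) = (l * (l + 1 - s) - s) / D" using D by (simp add: field_simps)
  also have "l * (l + 1 - s) - s = D" unfolding D_def by (simp add: algebra_simps)
  finally show ?thesis using D unfolding D_def uu_def ww_def by simp
qed

lemma uu_ww2: assumes "real s < l" shows "uu l s + (real s - 1) * ww l s = l * ww l s"
proof -
  define D where "D = (l+1)*(l-s)"
  have D: "D \<noteq> 0" using assms unfolding D_def by auto
  have "((l + 1 - s)/D) + (real s - 1) * (1/D) = ((l + 1 - s) + (real s - 1)) / D" using D by (simp add: field_simps)
  also have "(l + 1 - s) + (real s - 1) = l" by simp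
  finally show ?thesis using D unfolding D_def uu_def ww_def by simp
qed

context
  fixes n P Q K ow and l a b :: real
  assumes H: "Hstruct n P Q K ow" and lK: "real (card K) < l" and ab: "a > 0" "b > 0"
begin

lemma tt_l: "real (tt K ow v) < l" using tt_le[OF H, of v] lK by linarith

lemma yv_pos: "i < n \<Longrightarrow> yv l a b P Q K ow i > 0"
  unfolding yv_def using ab tt_l by (auto intro!: mult_pos_pos uu_pos ww_pos)

lemma yv_rows: assumes i: "i < n"
  shows "(\<Sum>j\<in>nbr n (Hedges P Q K ow) i. yv l a b P Q K ow j) =
    l * yv l a b P Q K ow i - (if i \<in> P then a - b * (\<Sum>v\<in>Q. uu l (tt K ow v))
       else if i \<in> Q then b - a * (\<Sum>v\<in>P. uu l (tt K ow v)) else 0)"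
proof -
  let ?y = "yv l a b P Q K ow"
  note HP = HP[OF H]
  have finC: "finite (Cl K ow v)" for v using finK[OF H] unfolding Cl_def by auto
  have sumC: "(\<Sum>j\<in>Cl K ow v. ?y j) = tt K ow v * ((if v \<in> P then a else b) * ww l (tt K ow v))"
    if v: "v \<in> P \<union> Q" for v
  proof -
    have "(\<Sum>j\<in>Cl K ow v. ?y j) = (\<Sum>j\<in>Cl K ow v. (if v \<in> P then a else b) * ww l (tt K ow v))"
      by (rule sum.cong) (use HP in \<open>auto simp: Cl_def yv_def\<close>)
    thus ?thesis by (simp add: tt_def)
  qed
  have "i \<in> P \<union> Q \<union> K" using HP(4) i by auto
  then consider "i \<in> P" | "i \<in> Q" | "i \<in> K" by auto
  thus ?thesis
  proof cases
    case 1
    have dis: "Q \<inter> Cl K ow i = {}" using HP(3) unfolding Cl_def by auto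
    have "(\<Sum>j\<in>nbr n (Hedges P Q K ow) i. ?y j) = (\<Sum>j\<in>Q. ?y j) + (\<Sum>j\<in>Cl K ow i. ?y j)"
      unfolding nbr_P[OF H 1] by (rule sum.union_disjoint) (use finK[OF H] finC dis in auto)
    also have "(\<Sum>j\<in>Q. ?y j) = b * (\<Sum>v\<in>Q. uu l (tt K ow v))"
      unfolding sum_distrib_left by (rule sum.cong) (use HP in \<open>auto simp: yv_def\<close>)
    also have "(\<Sum>j\<in>Cl K ow i. ?y j) = tt K ow i * (a * ww l (tt K ow i))" using sumC[of i] 1 by simp
    finally show ?thesis using 1 uu_ww1[OF tt_l, of i] unfolding yv_def by (simp add: algebra_simps)
  next
    case 2
    have dis: "P \<inter> Cl K ow i = {}" using HP(2) unfolding Cl_def by auto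
    have "(\<Sum>j\<in>nbr n (Hedges P Q K ow) i. ?y j) = (\<Sum>j\<in>P. ?y j) + (\<Sum>j\<in>Cl K ow i. ?y j)"
      unfolding nbr_Q[OF H 2] by (rule sum.union_disjoint) (use finK[OF H] finC dis in auto)
    also have "(\<Sum>j\<in>P. ?y j) = a * (\<Sum>v\<in>P. uu l (tt K ow v))"
      unfolding sum_distrib_left by (rule sum.cong) (use HP in \<open>auto simp: yv_def\<close>)
    also have "(\<Sum>j\<in>Cl K ow i. ?y j) = tt K ow i * (b * ww l (tt K ow i))" using sumC[of i] 2 HP(1) by auto
    finally show ?thesis using 2 HP(1) uu_ww1[OF tt_l, of i] unfolding yv_def by (auto simp: algebra_simps)
  next
    case 3
    define v where "v = ow i"
    have v: "v \<in> P \<union> Q" using HP(5) 3 unfolding v_def by auto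
    have iC: "i \<in> Cl K ow v" using 3 unfolding Cl_def v_def by auto
    have vC: "v \<notin> Cl K ow v - {i}" using v HP unfolding Cl_def by auto
    have "(\<Sum>j\<in>nbr n (Hedges P Q K ow) i. ?y j) = ?y v + (\<Sum>j\<in>Cl K ow v - {i}. ?y j)"
      unfolding nbr_K[OF H 3] v_def[symmetric] by (rule sum.insert) (use finC vC in auto)
    also have "(\<Sum>j\<in>Cl K ow v - {i}. ?y j) = (\<Sum>j\<in>Cl K ow v. ?y j) - ?y i"
      using finC iC by (simp add: sum_diff1)
    also have "(\<Sum>j\<in>Cl K ow v. ?y j) = tt K ow v * ((if v \<in> P then a else b) * ww l (tt K ow v))"
      by (rule sumC[OF v])
    finally have e: "(\<Sum>j\<in>nbr n (Hedges P Q K ow) i. ?y j) = ?y v + (tt K ow v * ((if v \<in> P then a else b) * ww l (tt K ow v)) - ?y i)" .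
    have yi: "?y i = (if v \<in> P then a else b) * ww l (tt K ow v)"
      using 3 HP unfolding yv_def v_def by auto
    have yvv: "?y v = (if v \<in> P then a else b) * uu l (tt K ow v)"
      using v HP(1) unfolding yv_def by auto
    have "i \<notin> P" "i \<notin> Q" using 3 HP by auto
    moreover have "uu l (tt K ow v) + (real (tt K ow v) - 1) * ww l (tt K ow v) = l * ww l (tt K ow v)"
      by (rule uu_ww2[OF tt_l])
    ultimately show ?thesis unfolding e yi yvv by (simp add: algebra_simps) (metis distrib_left mult.assoc)
  qed
qed

end

definition ee :: "real \<Rightarrow> nat \<Rightarrow> real" where "ee l s = s / (l - s)"

lemma ee_nonneg: "real s < l \<Longrightarrow> ee l s \<ge> 0" unfolding ee_def by auto
lemma ee_0[simp]: "ee l 0 = 0" unfolding ee_def by auto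
lemma ee_pos: "real s < l \<Longrightarrow> s \<ge> 1 \<Longrightarrow> ee l s > 0" unfolding ee_def by auto

lemma gapA: fixes A x y :: real assumes "A > 0" "x \<ge> 0" "y \<ge> 0"
  shows "(x+y)/A - x/(A+y) - y/(A+x) = (x/(A+y))*(y/(A+x))*((2*A+x+y)/A)"
proof -
  have "A + y > 0" "A + x > 0" using assms by auto
  hence d: "A \<noteq> 0" "A + y \<noteq> 0" "A + x \<noteq> 0" using assms by auto
  show ?thesis using d by (simp add: divide_simps) (simp add: algebra_simps)
qed

lemma ee_gap:
  assumes "real (t1 + t2) < l"
  shows "ee l (t1 + t2) - ee l t1 - ee l t2 = ee l t1 * ee l t2 * ((2 * l - t1 - t2) / (l - t1 - t2))"
proof -
  define A where "A = l - t1 - t2"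
  have A: "A > 0" using assms unfolding A_def by simp
  have e1: "l - real t1 = A + t2" "l - real t2 = A + t1" "l - real (t1 + t2) = A"
    "2 * l - t1 - t2 = 2 * A + t1 + t2" unfolding A_def by simp_all
  show ?thesis unfolding ee_def e1 using gapA[OF A, of t1 t2] by simp
qed

lemma ee_super:
  assumes "real (t1 + t2) < l"
  shows "ee l t1 + ee l t2 \<le> ee l (t1 + t2)"
    and "t1 \<ge> 1 \<Longrightarrow> t2 \<ge> 1 \<Longrightarrow> ee l t1 + ee l t2 < ee l (t1 + t2)"
proof -
  have p: "l - t1 - t2 > 0" "2 * l - t1 - t2 > 0" "real t1 < l" "real t2 < l" using assms by auto
  have "ee l t1 * ee l t2 * ((2 * l - t1 - t2) / (l - t1 - t2)) \<ge> 0"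
    using p ee_nonneg by (intro divide_nonneg_pos mult_nonneg_nonneg) auto
  thus "ee l t1 + ee l t2 \<le> ee l (t1 + t2)" using ee_gap[OF assms] by linarith
  assume "t1 \<ge> 1" "t2 \<ge> 1"
  hence "ee l t1 * ee l t2 * ((2 * l - t1 - t2) / (l - t1 - t2)) > 0"
    using p ee_pos by (intro divide_pos_pos mult_pos_pos) auto
  thus "ee l t1 + ee l t2 < ee l (t1 + t2)" using ee_gap[OF assms] by linarith
qed

lemma sum_ee:
  fixes f :: "'a \<Rightarrow> nat"
  assumes "finite S" "real (sum f S) < l"
  shows "(\<Sum>v\<in>S. ee l (f v)) \<le> ee l (sum f S) \<and>
    ((\<Sum>v\<in>S. ee l (f v)) = ee l (sum f S) \<longrightarrow> sum f S = 0 \<or> (\<exists>v\<in>S. f v = sum f S))"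
  using assms
proof (induction S rule: finite_induct)
  case empty
  then show ?case by simp
next
  case (insert x F)
  have l1: "real (f x + sum f F) < l" using insert by simp
  have lF: "real (sum f F) < l" using l1 by simp
  note IH = insert.IH[OF lF]
  have s: "(\<Sum>v\<in>insert x F. ee l (f v)) = ee l (f x) + (\<Sum>v\<in>F. ee l (f v))"
    using insert by simp
  have sf: "sum f (insert x F) = f x + sum f F" using insert by simp
  have A: "ee l (f x) + ee l (sum f F) \<le> ee l (f x + sum f F)" by (rule ee_super(1)[OF l1])
  have "(\<Sum>v\<in>insert x F. ee l (f v)) \<le> ee l (f x + sum f F)"
    using IH[THEN conjunct1] A s by linarith
  hence "(\<Sum>v\<in>insert x F. ee l (f v)) \<le> ee l (sum f (insert x F))" using sf by simp
  moreover have "sum f (insert x F) = 0 \<or> (\<exists>v\<in>insert x F. f v = sum f (insert x F))"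
    if eq: "(\<Sum>v\<in>insert x F. ee l (f v)) = ee l (sum f (insert x F))"
  proof -
    have e1: "(\<Sum>v\<in>F. ee l (f v)) = ee l (sum f F)"
      and e2: "ee l (f x) + ee l (sum f F) = ee l (f x + sum f F)"
      using IH[THEN conjunct1] A s eq[unfolded sf] by linarith+
    have "f x = 0 \<or> sum f F = 0"
    proof (rule ccontr)
      assume "\<not> ?thesis"
      hence "f x \<ge> 1" "sum f F \<ge> 1" by auto
      from ee_super(2)[OF l1 this] e2 show False by simp
    qed
    thus ?thesis
    proof
      assume fx: "f x = 0"
      from IH e1 have "sum f F = 0 \<or> (\<exists>v\<in>F. f v = sum f F)" by blast
      thus ?thesis using fx sf by auto
    next
      assume "sum f F = 0"
      thus ?thesis using sf by auto
    qed
  qed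
  ultimately show ?case by blast
qed

lemma nat_balanced:
  fixes p q m a b :: nat
  assumes "p + q = m" "a = m div 2" "b = m - a"
  shows "p * q \<le> a * b" "p * q = a * b \<Longrightarrow> p = a \<or> p = b" "a \<le> b"
    "4 * a * b + 1 \<ge> m * m" "a + b = m"
proof -
  have ab: "a + b = m" "a \<le> b" "b \<le> a + 1" using assms by auto
  show "a \<le> b" "a + b = m" using ab by simp_all
  have m2: "4 * a * b + 1 \<ge> m * m"
  proof (cases "b = a")
    case True hence "m = 2 * a" using ab by simp
    thus ?thesis using True by (simp add: algebra_simps)
  next
    case False hence "b = a + 1" using ab by simp
    moreover hence "m = 2 * a + 1" using ab by simp
    ultimately show ?thesis by (simp add: algebra_simps)
  qed
  show "4 * a * b + 1 \<ge> m * m" by (rule m2)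
  have "4 * (int p * int q) \<le> int m * int m"
  proof -
    have "(int p - int q)^2 \<ge> 0" by simp
    moreover have "int m = int p + int q" using assms(1) by simp
    ultimately show ?thesis by (simp add: power2_eq_square algebra_simps)
  qed
  moreover have "int m * int m \<le> 4 * (int a * int b) + 1"
  proof -
    have "int (m * m) \<le> int (4 * a * b + 1)" using m2 by (simp only: of_nat_le_iff)
    thus ?thesis by (simp add: algebra_simps)
  qed
  ultimately have "int p * int q \<le> int a * int b" by linarith
  thus "p * q \<le> a * b" by (metis of_nat_le_iff of_nat_mult)
  show "p = a \<or> p = b" if "p * q = a * b"
  proof -
    have "int p * int q = int a * int b" using that by (metis of_nat_mult)
    moreover have "int q = int a + int b - int p" using assms ab by simp
    ultimately have "(int p - int a) * (int p - int b) = 0" by (simp add: algebra_simps)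
    thus ?thesis by auto
  qed
qed

lemma phi_main:
  fixes p q a b m t TP TQ :: nat and l EP EQ :: real
  assumes pq: "p + q = m" and a: "a = m div 2" and b: "b = m - a" and m90: "m \<ge> 90"
    and mt: "9 * t < m" and t1: "t \<ge> 1" and T: "TP + TQ = t"
    and l: "l \<ge> 12 * m / 25" and leq: "l * l = a * b + b * ee l t / (l + 1)"
    and EP: "0 \<le> EP" "EP \<le> ee l TP" and EQ: "0 \<le> EQ" "EQ \<le> ee l TQ"
  shows "(p + EP/(l+1)) * (q + EQ/(l+1)) \<le> l * l \<and>
    ((p + EP/(l+1)) * (q + EQ/(l+1)) = l * l \<longrightarrow>
      (TQ = 0 \<and> EP = ee l t \<and> p = a \<and> q = b) \<or> (TP = 0 \<and> EQ = ee l t \<and> q = a \<and> p = b))"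
proof -
  note nb = nat_balanced[OF pq a b]
  have mr: "real m \<ge> 90" using m90 by simp
  have tm: "real t < real m / 9" using mt by linarith
  have lt: "l - t \<ge> 83 * m / 225" using l tm by linarith
  have tl: "real t < l" using lt mr by linarith
  have lpos: "l > 0" using l mr by linarith
  have TPl: "real TP < l" "real TQ < l" using T tl by linarith+
  define e1 where "e1 = ee l TP"
  define e2 where "e2 = ee l TQ"
  define et where "et = ee l t"
  have e1: "e1 \<ge> 0" unfolding e1_def using TPl(1) by (rule ee_nonneg)
  have e2: "e2 \<ge> 0" unfolding e2_def using TPl by (intro ee_nonneg) auto
  have etpos: "et > 0" unfolding et_def using tl t1 by (rule ee_pos)
  have tl': "real (TP + TQ) < l" using T tl by simp
  have sup: "e1 + e2 \<le> et" unfolding e1_def e2_def et_def T[symmetric] by (rule ee_super(1)[OF tl'])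
  define z1 where "z1 = EP / (l + 1)"
  define z2 where "z2 = EQ / (l + 1)"
  define Z where "Z = et / (l + 1)"
  have lp1: "l + 1 > 0" using lpos by simp
  have z1: "0 \<le> z1" "z1 \<le> e1 / (l + 1)" unfolding z1_def e1_def using EP lp1 by (auto intro: divide_right_mono)
  have z2: "0 \<le> z2" "z2 \<le> e2 / (l + 1)" unfolding z2_def e2_def using EQ lp1 by (auto intro: divide_right_mono)
  have zZ: "z1 + z2 \<le> Z"
  proof -
    have "z1 + z2 \<le> e1/(l+1) + e2/(l+1)" using z1 z2 by linarith
    also have "\<dots> = (e1 + e2)/(l+1)" by (simp add: add_divide_distrib)
    also have "\<dots> \<le> et/(l+1)" using sup lp1 by (intro divide_right_mono) auto
    finally show ?thesis unfolding Z_def .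
  qed
  have Zpos: "Z > 0" unfolding Z_def using etpos lp1 by simp
  have leq': "l * l = real a * real b + b * Z" unfolding Z_def et_def using leq by simp
  have prod: "(l - t) * (l + 1) \<ge> (83 * m / 225) * (12 * m / 25)"
    by (rule mult_mono) (use lt l mr in auto)
  have mZ: "m * Z < 2 / 3"
  proof -
    have "Z = t / ((l - t) * (l + 1))" unfolding Z_def et_def ee_def by simp
    have d: "(l - t) * (l + 1) > 0" using tl lp1 by simp
    have "real m * t \<le> real m * (real m / 9)" using tm by (intro mult_left_mono) auto
    also have "\<dots> < 2 / 3 * ((83 * m / 225) * (12 * m / 25))" using mr by (simp add: algebra_simps)
    also have "\<dots> \<le> 2 / 3 * ((l - t) * (l + 1))" using prod by linarith
    finally have "real m * t < 2 / 3 * ((l - t) * (l + 1))" .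
    hence "real m * t / ((l - t) * (l + 1)) < 2 / 3" using d by (simp add: divide_less_eq)
    thus ?thesis unfolding Z_def et_def ee_def by (simp add: field_simps)
  qed
  have Zs: "Z < 1 / 3"
  proof -
    have "Z * 90 \<le> Z * m" using Zpos mr by (intro mult_left_mono) auto
    thus ?thesis using mZ by (simp add: algebra_simps)
  qed
  have LHS: "(p + EP/(l+1)) * (q + EQ/(l+1)) = real p * real q + p * z2 + q * z1 + z1 * z2"
    unfolding z1_def z2_def by (simp add: algebra_simps)
  show ?thesis
  proof (cases "p * q < a * b")
    case True
    hence "p * q + 1 \<le> a * b" by simp
    hence "real (p * q + 1) \<le> real (a * b)" by (simp only: of_nat_le_iff)
    hence pq1: "real p * q \<le> real a * b - 1" by simp
    have "p \<le> m" "q \<le> m" using pq by auto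
    have "p * z2 \<le> m * z2" "q * z1 \<le> m * z1" using \<open>p \<le> m\<close> \<open>q \<le> m\<close> z1 z2
      by (auto intro: mult_right_mono)
    moreover have "real m * z2 + m * z1 \<le> m * Z"
    proof -
      have "real m * (z1 + z2) \<le> m * Z" using zZ by (intro mult_left_mono) auto
      thus ?thesis by (simp add: algebra_simps)
    qed
    ultimately have A1: "p * z2 + q * z1 \<le> m * Z" by linarith
    have A2: "z1 * z2 \<le> Z * Z" using z1 z2 zZ by (intro mult_mono) auto
    have "Z * Z \<le> (1/3) * (1/3)" using Zs Zpos by (intro mult_mono) auto
    hence "(p + EP/(l+1)) * (q + EQ/(l+1)) < real a * b" using LHS pq1 A1 A2 mZ by simp
    moreover have "b * Z \<ge> 0" using Zpos by simp
    ultimately show ?thesis using leq' by linarith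
  next
    case False
    hence eqab: "p * q = a * b" using nb(1) by simp
    hence pab: "p = a \<or> p = b" by (rule nb(2))
    have qab: "(p = a \<and> q = b) \<or> (p = b \<and> q = a)" using pab pq nb(5) by auto
    have pqb: "p \<le> b" "q \<le> b" using qab nb(3) by auto
    have a45: "a \<ge> 45" using a m90 by simp
    have ppos: "p > 0" "q > 0" using qab a45 nb(3) by auto
    have eqr: "real p * q = real a * b" using eqab by (metis of_nat_mult)
    consider (Q0) "TQ = 0" | (P0) "TP = 0" | (both) "TP \<ge> 1" "TQ \<ge> 1" by linarith
    thus ?thesis
    proof cases
      case Q0
      have "EQ = 0" using EQ Q0 by simp
      hence z20: "z2 = 0" unfolding z2_def by simp
      have TPt: "TP = t" using T Q0 by simp
      have z1Z: "z1 \<le> Z" using zZ z20 by simp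
      have "q * z1 \<le> b * Z" using pqb z1Z z1 Zpos by (intro mult_mono) auto
      hence le: "(p + EP/(l+1)) * (q + EQ/(l+1)) \<le> l * l" using LHS eqr z20 leq' by simp
      moreover have "TQ = 0 \<and> EP = ee l t \<and> p = a \<and> q = b"
        if eq: "(p + EP/(l+1)) * (q + EQ/(l+1)) = l * l"
      proof -
        have qz: "q * z1 = b * Z" using eq LHS eqr z20 leq' by simp
        have qb: "q = b"
        proof (rule ccontr)
          assume "q \<noteq> b" hence "real q < b" using pqb by simp
          hence "q * Z < b * Z" using Zpos by (intro mult_strict_right_mono) auto
          moreover have "q * z1 \<le> q * Z" using z1Z by (intro mult_left_mono) auto
          ultimately have "q * z1 < b * Z" by linarith
          thus False using qz by simp
        qed
        have "z1 = Z" using qz qb ppos by simp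
        hence "EP = et" unfolding z1_def Z_def using lp1 by (simp add: divide_cancel_right)
        moreover have "p = a" using qb pq nb(5) by simp
        ultimately show ?thesis using Q0 qb unfolding et_def by simp
      qed
      ultimately show ?thesis by blast
    next
      case P0
      have "EP = 0" using EP P0 by simp
      hence z10: "z1 = 0" unfolding z1_def by simp
      have z2Z: "z2 \<le> Z" using zZ z10 by simp
      have "p * z2 \<le> b * Z" using pqb z2Z z2 Zpos by (intro mult_mono) auto
      hence le: "(p + EP/(l+1)) * (q + EQ/(l+1)) \<le> l * l" using LHS eqr z10 leq' by simp
      moreover have "TP = 0 \<and> EQ = ee l t \<and> q = a \<and> p = b"
        if eq: "(p + EP/(l+1)) * (q + EQ/(l+1)) = l * l"
      proof -
        have pz: "p * z2 = b * Z" using eq LHS eqr z10 leq' by simp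
        have pb: "p = b"
        proof (rule ccontr)
          assume "p \<noteq> b" hence "real p < b" using pqb by simp
          hence "p * Z < b * Z" using Zpos by (intro mult_strict_right_mono) auto
          moreover have "p * z2 \<le> p * Z" using z2Z by (intro mult_left_mono) auto
          ultimately have "p * z2 < b * Z" by linarith
          thus False using pz by simp
        qed
        have "z2 = Z" using pz pb ppos by simp
        hence "EQ = et" unfolding z2_def Z_def using lp1 by (simp add: divide_cancel_right)
        moreover have "q = a" using pb pq nb(5) by simp
        ultimately show ?thesis using P0 pb unfolding et_def by simp
      qed
      ultimately show ?thesis by blast
    next
      case both
      have e1p: "e1 > 0" unfolding e1_def using TPl(1) both(1) by (rule ee_pos)
      have e2p: "e2 > 0" unfolding e2_def using TPl(2) both(2) by (rule ee_pos)
      have gap: "et - e1 - e2 = e1 * e2 * ((2 * l - TP - TQ) / (l - TP - TQ))"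
        unfolding et_def e1_def e2_def T[symmetric] by (rule ee_gap[OF tl'])
      have fr: "(2 * l - TP - TQ) / (l - TP - TQ) \<ge> 1" using tl' by simp
      have "e1 * e2 * 1 \<le> e1 * e2 * ((2 * l - TP - TQ) / (l - TP - TQ))"
        using fr e1p e2p by (intro mult_left_mono) auto
      hence g1: "e1 * e2 \<le> et - e1 - e2" using gap by simp
      have bge: "real b \<ge> 1" using nb(3) a45 by simp
      have "1 * (et - e1 - e2) \<le> b * (et - e1 - e2)"
      proof (rule mult_right_mono)
        have "0 < e1 * e2" using e1p e2p by simp
        thus "0 \<le> et - e1 - e2" using g1 by linarith
      qed (use bge in auto)
      hence "e1 * e2 \<le> b * (et - e1 - e2)" using g1 by simp
      hence g2a: "e1 * e2 / (l + 1) \<le> (b * (et - e1 - e2)) / (l + 1)"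
        using lp1 by (intro divide_right_mono) auto
      have "(b * (et - e1 - e2)) / (l + 1) = b * ((et - e1 - e2) / (l + 1))" by simp
      also have "(et - e1 - e2) / (l + 1) = et/(l+1) - e1/(l+1) - e2/(l+1)" by (simp add: diff_divide_distrib)
      finally have "b * Z - b * (e1/(l+1) + e2/(l+1)) = (b * (et - e1 - e2)) / (l + 1)"
        unfolding Z_def by (simp add: algebra_simps)
      hence g2: "e1 * e2 / (l + 1) \<le> b * Z - b * (e1/(l+1) + e2/(l+1))" using g2a by simp
      have "p * z2 + q * z1 \<le> b * z2 + b * z1" using pqb z1 z2
        by (intro add_mono mult_right_mono) auto
      also have "\<dots> = b * (z1 + z2)" by (simp add: algebra_simps)
      also have "\<dots> \<le> b * (e1/(l+1) + e2/(l+1))" using z1 z2 by (intro mult_left_mono) auto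
      finally have s1: "p * z2 + q * z1 \<le> b * (e1/(l+1) + e2/(l+1))" .
      have s2: "z1 * z2 \<le> (e1/(l+1)) * (e2/(l+1))" using z1 z2 by (intro mult_mono) auto
      have s3: "(e1/(l+1)) * (e2/(l+1)) < e1 * e2 / (l + 1)"
      proof -
        have "(e1/(l+1)) * (e2/(l+1)) = (e1 * e2 / (l+1)) / (l + 1)" by simp
        also have "\<dots> < e1 * e2 / (l + 1)" using e1p e2p lpos by (simp add: divide_less_eq)
        finally show ?thesis .
      qed
      have "(p + EP/(l+1)) * (q + EQ/(l+1)) < l * l" using LHS eqr s1 s2 s3 g2 leq' by linarith
      thus ?thesis by simp
    qed
  qed
qed

lemma lin5: fixes A M Y W F :: real assumes "A \<le> M / 2" "Y \<le> M / 9" "W \<le> Y" "F = M - A - W" "0 \<le> M" shows "0 \<le> F"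
  using assms by linarith

lemma exists_l:
  fixes m a b t :: nat
  assumes a: "a = m div 2" and b: "b = m - a" and m90: "m \<ge> 90" and mt: "9 * t < m"
  shows "\<exists>l::real. 12 * real m / 25 \<le> l \<and> l \<le> m \<and> l * l = a * b + b * ee l t / (l + 1)"
proof -
  have z: "0 + m = m" by simp
  note nb = nat_balanced[OF z a b]
  define f where "f x = x * x - real a * b - b * (t / (x - t)) / (x + 1)" for x :: real
  have mr: "real m \<ge> 90" using m90 by simp
  have tm: "real t < real m / 9" using mt by linarith
  define L0 where "L0 = 12 * real m / 25"
  have L0t: "L0 - t > 1" unfolding L0_def using tm mr by linarith
  have ab4: "real m * m \<le> 4 * (real a * b) + 1"
  proof -
    have "real (m * m) \<le> real (4 * a * b + 1)" using nb(4) by (simp only: of_nat_le_iff)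
    thus ?thesis by simp
  qed
  have "L0 * L0 \<le> real a * b"
  proof -
    have "L0 * L0 = 144 / 625 * (real m * m)" unfolding L0_def by simp
    also have "\<dots> \<le> real a * b"
    proof -
      have "real m * m \<ge> 90 * 90" using mr by (intro mult_mono) auto
      thus ?thesis using ab4 by linarith
    qed
    finally show ?thesis .
  qed
  moreover have "b * (t / (L0 - t)) / (L0 + 1) \<ge> 0" using L0t by simp
  ultimately have f0: "f L0 \<le> 0" unfolding f_def by linarith
  have f1: "f m \<ge> 0"
  proof -
    have am: "real a \<le> real m / 2" using a by linarith
    have bm: "real b \<le> m" using b by simp
    have "real a * b \<le> real m / 2 * m" using am bm by (intro mult_mono) auto
    hence h1: "real a * b \<le> (real m * m) / 2" by simp
    moreover have d: "real m - t \<ge> 1" "real m + 1 \<ge> 1" using tm mr by linarith+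
    have "t / (real m - t) \<le> t / 1" using d by (intro divide_left_mono) auto
    hence "t / (real m - t) \<le> t" by simp
    hence "t / (real m - t) \<le> real m / 9" using tm by linarith
    hence "b * (t / (real m - t)) \<le> m * (real m / 9)" using bm d
      by (intro mult_mono) auto
    hence h2: "b * (t / (real m - t)) \<le> (real m * m) / 9" by simp
    moreover have "b * (t / (real m - t)) / (m + 1) \<le> b * (t / (real m - t)) / 1"
      using d by (intro divide_left_mono) auto
    hence h3: "b * (t / (real m - t)) / (m + 1) \<le> b * (t / (real m - t))" by simp
    have h4: "f m = real m * m - real a * b - b * (t / (real m - t)) / (m + 1)"
      unfolding f_def by simp
    have h5: "real m * m \<ge> 0" by simp
    show ?thesis by (rule lin5[OF h1 h2 h3 h4 h5])
  qed
  have "L0 \<le> m" unfolding L0_def by simp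
  moreover have "\<forall>x. L0 \<le> x \<and> x \<le> m \<longrightarrow> isCont f x"
  proof (intro allI impI)
    fix x assume "L0 \<le> x \<and> x \<le> m"
    hence "x - t \<noteq> 0" "x + 1 \<noteq> 0" using L0t L0_def mr by auto
    thus "isCont f x" unfolding f_def by (intro continuous_intros) auto
  qed
  ultimately obtain l where l: "L0 \<le> l" "l \<le> m" "f l = 0" using IVT[of f L0 0 "real m"] f0 f1 by blast
  have "l * l = a * b + b * ee l t / (l + 1)" using l(3) unfolding f_def ee_def by simp
  thus ?thesis using l unfolding L0_def by auto
qed

lemma Gstar_decomp:
  assumes G: "G_star n r E"
  shows "\<exists>P Q K ow. Hstruct n P Q K ow \<and> E \<subseteq> Hedges P Q K ow \<and> card K = r - 2"
proof -
  have ex: "\<exists>VB EB (s::nat) (VG :: nat \<Rightarrow> nat set) (EG :: nat \<Rightarrow> nat set set).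
        graph_on VB EB \<and> bipartite VB EB \<and>
        (\<forall>i<s. graph_on (VG i) (EG i) \<and> card (VG i \<inter> VB) = 1) \<and>
        (\<forall>i<s. \<forall>j<s. i \<noteq> j \<longrightarrow> (VG i - VB) \<inter> (VG j - VB) = {}) \<and>
        {0..<n} = VB \<union> (\<Union>i<s. VG i) \<and>
        E = EB \<union> (\<Union>i<s. EG i) \<and>
        (\<Sum>i<s. card (VG i - VB)) = r - 2"
    using G unfolding G_star_def by (rule conjunct2)
  then obtain VB EB and s :: nat and VG :: "nat \<Rightarrow> nat set" and EG :: "nat \<Rightarrow> nat set set" where all: "graph_on VB EB \<and> bipartite VB EB \<and>
        (\<forall>i<s. graph_on (VG i) (EG i) \<and> card (VG i \<inter> VB) = 1) \<and>
        (\<forall>i<s. \<forall>j<s. i \<noteq> j \<longrightarrow> (VG i - VB) \<inter> (VG j - VB) = {}) \<and>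
        {0..<n} = VB \<union> (\<Union>i<s. VG i) \<and>
        E = EB \<union> (\<Union>i<s. EG i) \<and>
        (\<Sum>i<s. card (VG i - VB)) = r - 2" by (elim exE) (erule that)
  have gB: "graph_on VB EB" using all by blast
  have bB: "bipartite VB EB" using all by blast
  have gi: "\<forall>i<s. graph_on (VG i) (EG i) \<and> card (VG i \<inter> VB) = 1" using all by blast
  have dj: "\<forall>i<s. \<forall>j<s. i \<noteq> j \<longrightarrow> (VG i - VB) \<inter> (VG j - VB) = {}" using all by blast
  have U: "{0..<n} = VB \<union> (\<Union>i<s. VG i)" using all by blast
  have EU: "E = EB \<union> (\<Union>i<s. EG i)" using all by blast
  have cs: "(\<Sum>i<s. card (VG i - VB)) = r - 2" using all by blast
  from bB obtain X where X: "X \<subseteq> VB" "\<forall>e\<in>EB. card (e \<inter> X) = 1" unfolding bipartite_def by blast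
  have VBn: "VB \<subseteq> {0..<n}" using U by auto
  have VGn: "VG i \<subseteq> {0..<n}" if "i < s" for i using U that by auto
  have one: "\<exists>v. VG i \<inter> VB = {v}" if "i < s" for i using gi that by (simp add: card_1_singleton_iff)
  define vi where "vi i = (THE v. VG i \<inter> VB = {v})" for i
  have vi: "VG i \<inter> VB = {vi i}" if "i < s" for i
    using one[OF that] unfolding vi_def by (metis (mono_tags, lifting) the_equality singleton_inject)
  define K where "K = {0..<n} - VB"
  have Kcov: "\<exists>i<s. c \<in> VG i" if "c \<in> K" for c using that U unfolding K_def by auto
  have Kuniq: "i = j" if "c \<in> K" "i < s" "j < s" "c \<in> VG i" "c \<in> VG j" for c i j
  proof (rule ccontr)
    assume "i \<noteq> j"
    hence "(VG i - VB) \<inter> (VG j - VB) = {}" using dj that by blast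
    thus False using that unfolding K_def by auto
  qed
  define idx where "idx c = (SOME i. i < s \<and> c \<in> VG i)" for c
  have idx: "idx c < s" "c \<in> VG (idx c)" if "c \<in> K" for c
    using someI_ex[OF Kcov[OF that]] unfolding idx_def by auto
  define ow where "ow c = vi (idx c)" for c
  have owG: "ow c = vi i" if "c \<in> K" "i < s" "c \<in> VG i" for c i
    using Kuniq[OF that(1) idx(1)[OF that(1)] that(2) idx(2)[OF that(1)] that(3)] unfolding ow_def by simp
  have H: "Hstruct n X (VB - X) K ow"
    unfolding Hstruct_def
  proof (intro conjI ballI)
    show "X \<inter> (VB - X) = {}" "X \<inter> K = {}" "(VB - X) \<inter> K = {}" using X unfolding K_def by auto
    show "X \<union> (VB - X) \<union> K = {0..<n}" using X VBn unfolding K_def by auto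
    fix c assume c: "c \<in> K"
    have "ow c \<in> VB" using vi[OF idx(1)[OF c]] unfolding ow_def by auto
    thus "ow c \<in> X \<union> (VB - X)" by auto
  qed
  have sub: "E \<subseteq> Hedges X (VB - X) K ow"
  proof
    fix e assume "e \<in> E"
    hence "e \<in> EB \<or> (\<exists>i<s. e \<in> EG i)" using EU by auto
    thus "e \<in> Hedges X (VB - X) K ow"
    proof
      assume eB: "e \<in> EB"
      then obtain u v where uv: "e = {u, v}" "u \<noteq> v" "u \<in> VB" "v \<in> VB"
        using gB unfolding graph_on_def by blast
      have c1: "card ({u, v} \<inter> X) = 1" using X(2) eB uv(1) by auto
      have "(u \<in> X \<and> v \<notin> X) \<or> (v \<in> X \<and> u \<notin> X)"
      proof -
        { assume "u \<in> X" "v \<in> X" hence "{u,v} \<inter> X = {u,v}" by auto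
          hence False using c1 uv(2) by simp }
        moreover
        { assume "u \<notin> X" "v \<notin> X" hence "{u,v} \<inter> X = {}" by auto
          hence False using c1 by simp }
        ultimately show ?thesis by blast
      qed
      thus ?thesis unfolding Hedges_def uv(1) using uv by (auto simp: insert_commute)
    next
      assume "\<exists>i<s. e \<in> EG i"
      then obtain i where i: "i < s" "e \<in> EG i" by blast
      then obtain u w where uw: "e = {u, w}" "u \<noteq> w" "u \<in> VG i" "w \<in> VG i"
        using gi unfolding graph_on_def by blast
      have vii: "VG i \<inter> VB = {vi i}" by (rule vi[OF i(1)])
      have un: "u < n" "w < n" using VGn[OF i(1)] uw by auto
      consider "u \<in> VB" | "w \<in> VB" | "u \<notin> VB" "w \<notin> VB" by blast
      thus ?thesis
      proof cases
        case 1
        hence "u \<in> VG i \<inter> VB" using uw(3) by simp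
        hence uv: "u = vi i" using vii by simp
        have "w \<notin> VB"
        proof
          assume "w \<in> VB" hence "w \<in> VG i \<inter> VB" using uw(4) by simp
          hence "w = vi i" using vii by simp
          thus False using uv uw(2) by simp
        qed
        hence wK: "w \<in> K" using un unfolding K_def by auto
        have "ow w = u" using owG[OF wK i(1) uw(4)] uv by simp
        thus ?thesis unfolding Hedges_def uw(1) using wK by blast
      next
        case 2
        hence "w \<in> VG i \<inter> VB" using uw(4) by simp
        hence wv: "w = vi i" using vii by simp
        have "u \<notin> VB"
        proof
          assume "u \<in> VB" hence "u \<in> VG i \<inter> VB" using uw(3) by simp
          hence "u = vi i" using vii by simp
          thus False using wv uw(2) by simp
        qed
        hence uK: "u \<in> K" using un unfolding K_def by auto
        have "ow u = w" using owG[OF uK i(1) uw(3)] wv by simp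
        hence "e = {ow u, u}" using uw(1) by (auto simp: insert_commute)
        thus ?thesis unfolding Hedges_def using uK by blast
      next
        case 3
        hence K2: "u \<in> K" "w \<in> K" using un unfolding K_def by auto
        have "ow u = ow w" using owG[OF K2(1) i(1) uw(3)] owG[OF K2(2) i(1) uw(4)] by simp
        thus ?thesis unfolding Hedges_def uw(1) using K2 uw(2) by blast
      qed
    qed
  qed
  have finVG: "finite (VG i)" if "i < s" for i using gi that unfolding graph_on_def by auto
  have KU: "K = (\<Union>i<s. VG i - VB)" unfolding K_def using U by auto
  have "card K = (\<Sum>i<s. card (VG i - VB))" unfolding KU
    by (rule card_UN_disjoint) (use finVG dj in auto)
  hence "card K = r - 2" using cs by simp
  thus ?thesis using H sub by blast
qed

lemma Hedges_const_char:
  assumes H: "Hstruct n P Q K ow" and v: "v \<in> P" and c: "\<forall>c\<in>K. ow c = v"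
  shows "{x,y} \<in> Hedges P Q K ow \<longleftrightarrow> (x\<in>P \<and> y\<in>Q) \<or> (y\<in>P \<and> x\<in>Q) \<or> (x = v \<and> y\<in>K) \<or>
     (y = v \<and> x \<in> K) \<or> (x\<in>K \<and> y\<in>K \<and> x\<noteq>y)"
proof
  assume "{x,y} \<in> Hedges P Q K ow"
  thus "(x\<in>P \<and> y\<in>Q) \<or> (y\<in>P \<and> x\<in>Q) \<or> (x = v \<and> y\<in>K) \<or> (y = v \<and> x \<in> K) \<or> (x\<in>K \<and> y\<in>K \<and> x\<noteq>y)"
    unfolding Hedges_def using c by (auto simp: doubleton_eq_iff)
next
  assume "(x\<in>P \<and> y\<in>Q) \<or> (y\<in>P \<and> x\<in>Q) \<or> (x = v \<and> y\<in>K) \<or> (y = v \<and> x \<in> K) \<or> (x\<in>K \<and> y\<in>K \<and> x\<noteq>y)"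
  thus "{x,y} \<in> Hedges P Q K ow"
  proof (elim disjE)
    assume "x\<in>P \<and> y\<in>Q" thus ?thesis unfolding Hedges_def by blast
  next
    assume "y\<in>P \<and> x\<in>Q" hence "{x,y} = {y,x} \<and> y \<in> P \<and> x \<in> Q" by (auto simp: insert_commute)
    thus ?thesis unfolding Hedges_def by blast
  next
    assume "x = v \<and> y\<in>K" hence "{x,y} = {ow y, y} \<and> y \<in> K" using c by auto
    thus ?thesis unfolding Hedges_def by blast
  next
    assume "y = v \<and> x\<in>K" hence "{x,y} = {ow x, x} \<and> x \<in> K" using c by (auto simp: insert_commute)
    thus ?thesis unfolding Hedges_def by blast
  next
    assume "x\<in>K \<and> y\<in>K \<and> x\<noteq>y" hence "ow x = ow y" using c by auto
    thus ?thesis unfolding Hedges_def using \<open>x\<in>K \<and> y\<in>K \<and> x\<noteq>y\<close> by blast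
  qed
qed

lemma iso_const:
  assumes H1: "Hstruct n P Q K ow" and H2: "Hstruct n P' Q' K' ow'"
    and v: "v \<in> P" and v': "v' \<in> P'" and c: "\<forall>c\<in>K. ow c = v" and c': "\<forall>c\<in>K'. ow' c = v'"
    and cP: "card P = card P'" and cQ: "card Q = card Q'" and cK: "card K = card K'"
  shows "graph_iso n (Hedges P Q K ow) (Hedges P' Q' K' ow')"
proof -
  note h1 = HP[OF H1] and h2 = HP[OF H2]
  note f1 = finK[OF H1] and f2 = finK[OF H2]
  have "card (P - {v}) = card (P' - {v'})" using cP v v' f1 f2 by simp
  hence "\<exists>h. bij_betw h (P - {v}) (P' - {v'})" by (intro finite_same_card_bij) (use f1 f2 in auto)
  then obtain g1 where g1: "bij_betw g1 (P - {v}) (P' - {v'})" by blast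
  have "\<exists>h. bij_betw h Q Q'" by (intro finite_same_card_bij) (use f1 f2 cQ in auto)
  then obtain g2 where g2: "bij_betw g2 Q Q'" by blast
  have "\<exists>h. bij_betw h K K'" by (intro finite_same_card_bij) (use f1 f2 cK in auto)
  then obtain g3 where g3: "bij_betw g3 K K'" by blast
  define f where "f x = (if x = v then v' else if x \<in> P then g1 x else if x \<in> Q then g2 x else g3 x)" for x
  have b0: "bij_betw f {v} {v'}" unfolding f_def by (simp add: bij_betw_def)
  have b1: "bij_betw f (P - {v}) (P' - {v'})"
    by (rule bij_betw_cong[THEN iffD2, OF _ g1]) (auto simp: f_def)
  have b2: "bij_betw f Q Q'"
    by (rule bij_betw_cong[THEN iffD2, OF _ g2]) (use h1(1) v in \<open>auto simp: f_def\<close>)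
  have b3: "bij_betw f K K'"
    by (rule bij_betw_cong[THEN iffD2, OF _ g3]) (use h1(2,3) v in \<open>auto simp: f_def\<close>)
  have b01: "bij_betw f ({v} \<union> (P - {v})) ({v'} \<union> (P' - {v'}))"
    by (rule bij_betw_combine[OF b0 b1]) auto
  have b012: "bij_betw f (({v} \<union> (P - {v})) \<union> Q) (({v'} \<union> (P' - {v'})) \<union> Q')"
    by (rule bij_betw_combine[OF b01 b2]) (use h2(1,2,3) v' in auto)
  have b0123: "bij_betw f ((({v} \<union> (P - {v})) \<union> Q) \<union> K) ((({v'} \<union> (P' - {v'})) \<union> Q') \<union> K')"
    by (rule bij_betw_combine[OF b012 b3]) (use h2(1,2,3) v' in auto)
  have e1: "(({v} \<union> (P - {v})) \<union> Q) \<union> K = {0..<n}" using h1(4) v by blast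
  have e2: "(({v'} \<union> (P' - {v'})) \<union> Q') \<union> K' = {0..<n}" using h2(4) v' by blast
  have bij: "bij_betw f {0..<n} {0..<n}" using b0123 unfolding e1 e2 .
  have mQ: "x \<in> Q \<Longrightarrow> f x \<in> Q'" for x using b2 unfolding bij_betw_def by blast
  have mK: "x \<in> K \<Longrightarrow> f x \<in> K'" for x using b3 unfolding bij_betw_def by blast
  have mv: "x \<in> P - {v} \<Longrightarrow> f x \<in> P' - {v'}" for x using b1 unfolding bij_betw_def by blast
  have mP: "f x \<in> P'" if x: "x \<in> P" for x
  proof (cases "x = v")
    case True thus ?thesis using v' unfolding f_def by simp
  next
    case False thus ?thesis using mv[of x] x by blast
  qed
  have iP: "x \<in> P \<longleftrightarrow> f x \<in> P'" if "x < n" for x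
  proof -
    have "x \<in> P \<union> Q \<union> K" using h1(4) that by simp
    hence "x \<in> P \<or> x \<in> Q \<or> x \<in> K" by blast
    thus ?thesis using mP mQ mK h2(1,2,3) by blast
  qed
  have iQ: "x \<in> Q \<longleftrightarrow> f x \<in> Q'" if "x < n" for x
  proof -
    have "x \<in> P \<union> Q \<union> K" using h1(4) that by simp
    hence "x \<in> P \<or> x \<in> Q \<or> x \<in> K" by blast
    thus ?thesis using mP mQ mK h2(1,2,3) by blast
  qed
  have iK: "x \<in> K \<longleftrightarrow> f x \<in> K'" if "x < n" for x
  proof -
    have "x \<in> P \<union> Q \<union> K" using h1(4) that by simp
    hence "x \<in> P \<or> x \<in> Q \<or> x \<in> K" by blast
    thus ?thesis using mP mQ mK h2(2,3) by blast
  qed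
  have iv: "x = v \<longleftrightarrow> f x = v'" if "x < n" for x
  proof
    assume "x = v" thus "f x = v'" unfolding f_def by simp
  next
    assume fx: "f x = v'"
    show "x = v"
    proof (rule ccontr)
      assume nv: "x \<noteq> v"
      have "x \<in> P \<union> Q \<union> K" using h1(4) that by simp
      hence "x \<in> P - {v} \<or> x \<in> Q \<or> x \<in> K" using nv by blast
      moreover have "f x \<noteq> v'" if "x \<in> P - {v}" using mv[OF that] by simp
      moreover have "f x \<noteq> v'" if "x \<in> Q" using mQ[OF that] h2(1) v' by blast
      moreover have "f x \<noteq> v'" if "x \<in> K" using mK[OF that] h2(2) v' by blast
      ultimately show False using fx by blast
    qed
  qed
  have inj: "x \<noteq> y \<longleftrightarrow> f x \<noteq> f y" if "x < n" "y < n" for x y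
    using bij that unfolding bij_betw_def inj_on_def by auto
  show ?thesis unfolding graph_iso_def
  proof (intro exI conjI ballI)
    show "bij_betw f {0..<n} {0..<n}" by (rule bij)
    fix x y assume x: "x \<in> {0..<n}" and y: "y \<in> {0..<n}"
    hence xn: "x < n" and yn: "y < n" by auto
    show "{x, y} \<in> Hedges P Q K ow \<longleftrightarrow> {f x, f y} \<in> Hedges P' Q' K' ow'"
      unfolding Hedges_const_char[OF H1 v c] Hedges_const_char[OF H2 v' c']
      using iP[OF xn] iP[OF yn] iQ[OF xn] iQ[OF yn] iK[OF xn] iK[OF yn] iv[OF xn] iv[OF yn] inj[OF xn yn]
      by (simp only:)
  qed
qed

lemma TK_struct:
  assumes rn: "r \<le> n" and r2: "2 \<le> r" and m: "m = n - r + 2" and a: "a = m div 2" and a1: "a \<ge> 1"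
  shows "TK n r = Hedges {0..<a} {a..<m} {m..<n} (\<lambda>_. 0)"
    and "Hstruct n {0..<a} {a..<m} {m..<n} (\<lambda>_. 0)"
proof -
  have am: "a \<le> m" using a by simp
  have mn: "m \<le> n" using m rn r2 by simp
  have m1: "m \<ge> 1" using am a1 by simp
  show "Hstruct n {0..<a} {a..<m} {m..<n} (\<lambda>_. 0)"
    unfolding Hstruct_def using am mn a1 by auto
  have T: "TK n r = {{x, y} | x y. x < a \<and> a \<le> y \<and> y < m} \<union>
     {{x, y} | x y. x \<in> insert 0 {m..<n} \<and> y \<in> insert 0 {m..<n} \<and> x \<noteq> y}"
    unfolding TK_def Let_def m a by simp
  show "TK n r = Hedges {0..<a} {a..<m} {m..<n} (\<lambda>_. 0)"
  proof
    show "TK n r \<subseteq> Hedges {0..<a} {a..<m} {m..<n} (\<lambda>_. 0)"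
    proof
      fix e assume "e \<in> TK n r"
      hence "(\<exists>x y. e = {x,y} \<and> x < a \<and> a \<le> y \<and> y < m) \<or>
          (\<exists>x y. e = {x,y} \<and> x \<in> insert 0 {m..<n} \<and> y \<in> insert 0 {m..<n} \<and> x \<noteq> y)"
        unfolding T by blast
      thus "e \<in> Hedges {0..<a} {a..<m} {m..<n} (\<lambda>_. 0)"
      proof
        assume "\<exists>x y. e = {x,y} \<and> x < a \<and> a \<le> y \<and> y < m"
        thus ?thesis unfolding Hedges_def by auto
      next
        assume "\<exists>x y. e = {x,y} \<and> x \<in> insert 0 {m..<n} \<and> y \<in> insert 0 {m..<n} \<and> x \<noteq> y"
        then obtain x y where xy: "e = {x,y}" "x \<in> insert 0 {m..<n}" "y \<in> insert 0 {m..<n}" "x \<noteq> y" by blast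
        consider "x = 0" "y \<in> {m..<n}" | "y = 0" "x \<in> {m..<n}" | "x \<in> {m..<n}" "y \<in> {m..<n}"
          using xy by auto
        thus ?thesis
        proof cases
          case 1 thus ?thesis unfolding Hedges_def xy(1) by blast
        next
          case 2 hence "e = {(\<lambda>_. 0::nat) x, x}" using xy(1) by (auto simp: insert_commute)
          thus ?thesis unfolding Hedges_def using 2 by blast
        next
          case 3 thus ?thesis unfolding Hedges_def xy(1) using xy(4) by blast
        qed
      qed
    qed
    show "Hedges {0..<a} {a..<m} {m..<n} (\<lambda>_. 0) \<subseteq> TK n r"
    proof
      fix e assume "e \<in> Hedges {0..<a} {a..<m} {m..<n} (\<lambda>_. 0)"
      hence "(\<exists>x y. e = {x,y} \<and> x \<in> {0..<a} \<and> y \<in> {a..<m}) \<or> (\<exists>c. e = {0, c} \<and> c \<in> {m..<n}) \<or>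
          (\<exists>c d. e = {c,d} \<and> c \<in> {m..<n} \<and> d \<in> {m..<n} \<and> c \<noteq> d)"
        unfolding Hedges_def by blast
      thus "e \<in> TK n r"
      proof (elim disjE exE conjE)
        fix x y assume "e = {x,y}" "x \<in> {0..<a}" "y \<in> {a..<m}"
        thus ?thesis unfolding T by auto
      next
        fix c assume "e = {0, c}" "c \<in> {m..<n}"
        moreover have "(0::nat) \<noteq> c" using \<open>c \<in> {m..<n}\<close> m1 by auto
        ultimately show ?thesis unfolding T by blast
      next
        fix c d assume "e = {c,d}" "c \<in> {m..<n}" "d \<in> {m..<n}" "c \<noteq> d"
        thus ?thesis unfolding T by blast
      qed
    qed
  qed
qed

lemma Hstruct_swap: "Hstruct n P Q K ow \<Longrightarrow> Hstruct n Q P K ow"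
  unfolding Hstruct_def by blast

lemma uu_ee: assumes "real s < l" "0 < l" shows "uu l s = (1 + ee l s / (l + 1)) / l"
proof -
  define D where "D = (l + 1) * (l - s)"
  have D: "D > 0" using assms unfolding D_def by simp
  have e: "ee l s / (l + 1) = s / D" unfolding ee_def D_def by (simp add: mult.commute)
  have "(1 + s / D) / l = ((D + s) / D) / l" using D by (simp add: field_simps)
  also have "D + s = l * (l + 1 - s)" unfolding D_def by (simp add: algebra_simps)
  also have "(l * (l + 1 - s) / D) / l = (l + 1 - s) / D" using assms by simp
  finally show ?thesis unfolding uu_def e D_def by simp
qed

lemma sumF:
  assumes "finite P" "0 < l" "\<And>v. v \<in> P \<Longrightarrow> real (f v) < l"
  shows "(\<Sum>v\<in>P. uu l (f v)) = (card P + (\<Sum>v\<in>P. ee l (f v)) / (l + 1)) / l"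
proof -
  have "(\<Sum>v\<in>P. uu l (f v)) = (\<Sum>v\<in>P. (1 + ee l (f v) / (l + 1)) / l)"
    by (rule sum.cong) (use assms uu_ee in auto)
  also have "\<dots> = (\<Sum>v\<in>P. (1 + ee l (f v) / (l + 1))) / l" by (rule sum_divide_distrib[symmetric])
  also have "(\<Sum>v\<in>P. (1 + ee l (f v) / (l + 1))) = card P + (\<Sum>v\<in>P. ee l (f v)) / (l + 1)"
    by (simp add: sum.distrib sum_divide_distrib)
  finally show ?thesis .
qed

theorem lemma2p7:
  fixes k n r :: nat and E :: "nat set set"
  assumes "k \<ge> 1" and "n \<ge> 100 * k" and "3 \<le> r" and "r \<le> 10 * k"
    and "G_star n r E"
  shows "lambda_G n E \<le> lambda_G n (TK n r) \<and>
         (lambda_G n E = lambda_G n (TK n r) \<longleftrightarrow> graph_iso n E (TK n r))"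
proof -
  define t where "t = r - 2"
  define m where "m = n - r + 2"
  define a where "a = m div 2"
  define b where "b = m - a"
  have r10: "10 * r \<le> n" using assms(2,4) by linarith
  have rn: "r \<le> n" "2 \<le> r" using r10 assms(3) by linarith+
  have t1: "t \<ge> 1" unfolding t_def using assms(3) by simp
  have mt: "9 * t < m" unfolding m_def t_def using r10 assms(3) by linarith
  have m90: "m \<ge> 90" unfolding m_def using r10 assms(1,2) by linarith
  have nm: "n = m + t" unfolding m_def t_def using rn by linarith
  have npos: "n > 0" using nm m90 by simp
  have z: "0 + m = m" by simp
  note nb = nat_balanced[OF z a_def b_def]
  have a45: "a \<ge> 45" unfolding a_def using m90 by simp
  obtain l :: real where l: "12 * real m / 25 \<le> l" "l \<le> m" and leq: "l * l = a * b + b * ee l t / (l + 1)"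
    using exists_l[OF a_def b_def m90 mt] by blast
  have l1': "real (12 * m) / 25 \<le> l" using l(1) by simp
  have tl: "real t < l" using l(1) mt by linarith
  have lpos: "l > 0" using l(1) m90 by linarith
  have one_gt0: "(0::real) < 1" by simp
  define P0 where "P0 = {0..<a}"
  define Q0 where "Q0 = {a..<m}"
  define K0 where "K0 = {m..<n}"
  define o0 where "o0 = (\<lambda>_::nat. 0::nat)"
  have a1: "a \<ge> 1" using a45 by simp
  have TKH: "TK n r = Hedges P0 Q0 K0 o0" and H0: "Hstruct n P0 Q0 K0 o0"
    using TK_struct[OF rn m_def a_def a1] unfolding P0_def Q0_def K0_def o0_def by auto
  have cK0: "card K0 = t" unfolding K0_def using nm by simp
  have tt0: "tt K0 o0 v = (if v = 0 then t else 0)" for v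
  proof -
    have "Cl K0 o0 v = (if v = 0 then K0 else {})" unfolding Cl_def o0_def by auto
    thus ?thesis unfolding tt_def using cK0 by simp
  qed
  have cP0: "card P0 = a" and cQ0: "card Q0 = b" unfolding P0_def Q0_def b_def by simp_all
  have zP0: "0 \<in> P0" unfolding P0_def using a1 by simp
  have zQ0: "0 \<notin> Q0" unfolding Q0_def using a1 by simp
  have fin0: "finite P0" "finite Q0" unfolding P0_def Q0_def by simp_all
  have ttl0: "real (tt K0 o0 v) < l" for v using tt0 tl lpos by simp
  have EP0: "(\<Sum>v\<in>P0. ee l (tt K0 o0 v)) = ee l t"
  proof -
    have "(\<Sum>v\<in>P0. ee l (tt K0 o0 v)) = (\<Sum>v\<in>P0. if v = 0 then ee l t else 0)"
      by (rule sum.cong) (auto simp: tt0)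
    also have "\<dots> = ee l t" using zP0 fin0 by simp
    finally show ?thesis .
  qed
  have EQ0: "(\<Sum>v\<in>Q0. ee l (tt K0 o0 v)) = 0"
    by (rule sum.neutral) (use zQ0 tt0 in auto)
  define FP0 where "FP0 = (\<Sum>v\<in>P0. uu l (tt K0 o0 v))"
  define FQ0 where "FQ0 = (\<Sum>v\<in>Q0. uu l (tt K0 o0 v))"
  have FP0: "FP0 = (a + ee l t / (l + 1)) / l"
    unfolding FP0_def sumF[OF fin0(1) lpos ttl0] EP0 cP0 ..
  have FQ0: "FQ0 = b / l"
    unfolding FQ0_def sumF[OF fin0(2) lpos ttl0] EQ0 cQ0 by simp
  have FF0: "FP0 * FQ0 = 1"
  proof -
    have "FP0 * FQ0 = ((a + ee l t / (l + 1)) * b) / (l * l)" unfolding FP0 FQ0 by simp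
    also have "(a + ee l t / (l + 1)) * b = l * l" using leq by (simp add: algebra_simps)
    finally show ?thesis using lpos by simp
  qed
  have FP0pos: "FP0 > 0" unfolding FP0 using lpos a1 ee_nonneg[OF tl] by (intro divide_pos_pos add_pos_nonneg) auto
  have cK0l: "real (card K0) < l" using cK0 tl by simp
  have lowTK: "l \<le> lambda_G n (TK n r)"
  proof -
    let ?y = "yv l 1 FP0 P0 Q0 K0 o0"
    have rows: "(\<Sum>j\<in>nbr n (TK n r) i. ?y j) = l * ?y i" if i: "i < n" for i
      using yv_rows[OF H0 cK0l _ FP0pos i] FF0 unfolding TKH FP0_def[symmetric] FQ0_def[symmetric]
      by (simp add: mult.commute)
    show ?thesis by (rule eig_lower[OF npos yv_pos[OF H0 cK0l _ FP0pos] _ rows]) (use lpos in auto)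
  qed
  obtain P Q K ow where H: "Hstruct n P Q K ow" and sub: "E \<subseteq> Hedges P Q K ow" and cK: "card K = r - 2"
    using Gstar_decomp[OF assms(5)] by blast
  note hp = HP[OF H]
  note fin = finK[OF H]
  have cKt: "card K = t" using cK t_def by simp
  have cKl: "real (card K) < l" using cKt tl by simp
  have ttl: "real (tt K ow v) < l" for v using tt_le[OF H, of v] cKl by linarith
  have "card (P \<union> Q \<union> K) = n" using hp(4) by simp
  hence pqm: "card P + card Q = m" using fin hp(1,2,3) nm cKt by (simp add: card_Un_disjoint Int_Un_distrib2)
  define TP where "TP = (\<Sum>v\<in>P. tt K ow v)"
  define TQ where "TQ = (\<Sum>v\<in>Q. tt K ow v)"
  have TPQ: "TP + TQ = t" unfolding TP_def TQ_def using sum_tt[OF H] cKt by simp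
  define EP where "EP = (\<Sum>v\<in>P. ee l (tt K ow v))"
  define EQ where "EQ = (\<Sum>v\<in>Q. ee l (tt K ow v))"
  have TPl: "real TP < l" "real TQ < l" using TPQ tl by linarith+
  have sP: "EP \<le> ee l TP \<and> (EP = ee l TP \<longrightarrow> TP = 0 \<or> (\<exists>v\<in>P. tt K ow v = TP))"
    using sum_ee[OF fin(2), of "tt K ow" l] TPl unfolding EP_def TP_def by blast
  have sQ: "EQ \<le> ee l TQ \<and> (EQ = ee l TQ \<longrightarrow> TQ = 0 \<or> (\<exists>v\<in>Q. tt K ow v = TQ))"
    using sum_ee[OF fin(3), of "tt K ow" l] TPl unfolding EQ_def TQ_def by blast
  have EP0': "EP \<ge> 0" unfolding EP_def by (intro sum_nonneg ee_nonneg ttl)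
  have EQ0': "EQ \<ge> 0" unfolding EQ_def by (intro sum_nonneg ee_nonneg ttl)
  have ph: "(card P + EP/(l+1)) * (card Q + EQ/(l+1)) \<le> l * l \<and>
    ((card P + EP/(l+1)) * (card Q + EQ/(l+1)) = l * l \<longrightarrow>
      (TQ = 0 \<and> EP = ee l t \<and> card P = a \<and> card Q = b) \<or> (TP = 0 \<and> EQ = ee l t \<and> card Q = a \<and> card P = b))"
    by (rule phi_main[OF pqm a_def b_def m90 mt t1 TPQ l1' leq EP0' conjunct1[OF sP] EQ0' conjunct1[OF sQ]])
  define FP where "FP = (\<Sum>v\<in>P. uu l (tt K ow v))"
  define FQ where "FQ = (\<Sum>v\<in>Q. uu l (tt K ow v))"
  have FP: "FP = (card P + EP / (l + 1)) / l" unfolding FP_def EP_def by (rule sumF[OF fin(2) lpos ttl])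
  have FQ: "FQ = (card Q + EQ / (l + 1)) / l" unfolding FQ_def EQ_def by (rule sumF[OF fin(3) lpos ttl])
  have FPnn: "FP \<ge> 0" "FQ \<ge> 0" unfolding FP FQ using lpos EP0' EQ0' by simp_all
  have FF: "FP * FQ = (card P + EP/(l+1)) * (card Q + EQ/(l+1)) / (l * l)" unfolding FP FQ by simp
  have FFle: "FP * FQ \<le> 1" using ph lpos unfolding FF by simp
  have isoR: "lambda_G n (TK n r) \<le> lambda_G n E" if "graph_iso n E (TK n r)"
    by (rule iso_lower[OF npos that])
  show ?thesis
  proof (cases "FP * FQ < 1")
    case True
    define \<beta> where "\<beta> = FP + (1 - FP * FQ) / (2 * FQ + 1)"
    have d: "2 * FQ + 1 > 0" using FPnn by simp
    have bgt: "\<beta> > FP" unfolding \<beta>_def using True d by simp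
    have bpos: "\<beta> > 0" using bgt FPnn by linarith
    have bFQ: "\<beta> * FQ < 1"
    proof -
      have "(1 - FP * FQ) / (2 * FQ + 1) * FQ < (1 - FP * FQ)"
      proof -
        have "FQ / (2 * FQ + 1) < 1" using d FPnn by (simp add: divide_less_eq)
        hence "(1 - FP * FQ) * (FQ / (2 * FQ + 1)) < (1 - FP * FQ) * 1"
          using True by (intro mult_strict_left_mono) auto
        thus ?thesis by (simp add: algebra_simps)
      qed
      thus ?thesis unfolding \<beta>_def by (simp add: algebra_simps)
    qed
    let ?y = "yv l 1 \<beta> P Q K ow"
    have corr: "(\<Sum>j\<in>nbr n (Hedges P Q K ow) i. ?y j) = l * ?y i - (if i \<in> P then 1 - \<beta> * FQ
       else if i \<in> Q then \<beta> - FP else 0)" if i: "i < n" for i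
      using yv_rows[OF H cKl _ bpos i] unfolding FP_def[symmetric] FQ_def[symmetric] by simp
    have rows: "(\<Sum>j\<in>nbr n (Hedges P Q K ow) i. ?y j) \<le> l * ?y i" if i: "i < n" for i
    proof -
      have "(if i \<in> P then 1 - \<beta> * FQ else if i \<in> Q then \<beta> - FP else 0) \<ge> 0"
        using bFQ bgt by simp
      thus ?thesis using corr[OF i] by linarith
    qed
    note cw = cw_bound[OF npos sub yv_pos[OF H cKl one_gt0 bpos] rows]
    have leE: "lambda_G n E \<le> l" using cw by blast
    have tightF: False if tight: "(\<Sum>j\<in>nbr n (Hedges P Q K ow) i. ?y j) = l * ?y i" and iPQ: "i \<in> P \<union> Q" for i
    proof -
      have i: "i < n" using iPQ hp(4) by auto
      have c: "(if i \<in> P then 1 - \<beta> * FQ else if i \<in> Q then \<beta> - FP else 0) = 0"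
        using corr[OF i] tight by simp
      show False
      proof (cases "i \<in> P")
        case True thus False using c bFQ by simp
      next
        case False hence "i \<in> Q" using iPQ by blast
        thus False using c bgt False by simp
      qed
    qed
    have ne: "lambda_G n E \<noteq> lambda_G n (TK n r)"
    proof
      assume eq: "lambda_G n E = lambda_G n (TK n r)"
      hence "lambda_G n E = l" using leE lowTK by linarith
      with cw obtain M where M: "M \<noteq> {}" "M \<subseteq> {0..<n}"
        "\<forall>i\<in>M. (\<Sum>j\<in>nbr n (Hedges P Q K ow) i. ?y j) = l * ?y i \<and>
          nbr n (Hedges P Q K ow) i \<subseteq> M \<and> nbr n (Hedges P Q K ow) i \<subseteq> nbr n E i" by blast
      obtain i where iM: "i \<in> M" using M(1) by blast
      have "i \<in> P \<union> Q \<union> K" using iM M(2) hp(4) by auto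
      thus False
      proof (elim UnE)
        assume "i \<in> P" thus False using tightF M(3) iM by blast
      next
        assume "i \<in> Q" thus False using tightF M(3) iM by blast
      next
        assume iK: "i \<in> K"
        have "ow i \<in> nbr n (Hedges P Q K ow) i" unfolding nbr_K[OF H iK] by simp
        hence "ow i \<in> M" using M(3) iM by blast
        thus False using tightF M(3) hp(5)[OF iK] by blast
      qed
    qed
    have lt: "lambda_G n E < lambda_G n (TK n r)" using ne leE lowTK by linarith
    have niso: "\<not> graph_iso n E (TK n r)"
    proof
      assume "graph_iso n E (TK n r)"
      hence "lambda_G n (TK n r) \<le> lambda_G n E" by (rule isoR)
      thus False using lt by linarith
    qed
    show ?thesis using lt niso by simp
  next
    case False
    hence FF1: "FP * FQ = 1" using FFle by simp
    have FPpos: "FP > 0"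
    proof (rule ccontr)
      assume "\<not> FP > 0" hence "FP = 0" using FPnn by simp
      thus False using FF1 by simp
    qed
    let ?y = "yv l 1 FP P Q K ow"
    have rowsE: "(\<Sum>j\<in>nbr n (Hedges P Q K ow) i. ?y j) = l * ?y i" if i: "i < n" for i
      using yv_rows[OF H cKl one_gt0 FPpos i] FF1 unfolding FP_def[symmetric] FQ_def[symmetric]
      by (simp add: mult.commute)
    have rows: "(\<Sum>j\<in>nbr n (Hedges P Q K ow) i. ?y j) \<le> l * ?y i" if i: "i < n" for i
      using rowsE[OF i] by simp
    note cw = cw_bound[OF npos sub yv_pos[OF H cKl one_gt0 FPpos] rows]
    have leE: "lambda_G n E \<le> l" using cw by blast
    have phe: "(card P + EP/(l+1)) * (card Q + EQ/(l+1)) = l * l"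
      using FF1 lpos unfolding FF by (simp add: divide_eq_1_iff)
    have shape: "(TQ = 0 \<and> EP = ee l t \<and> card P = a \<and> card Q = b) \<or> (TP = 0 \<and> EQ = ee l t \<and> card Q = a \<and> card P = b)"
      using ph phe by blast
    have Pne: "P \<noteq> {}" "Q \<noteq> {}" using shape a45 nb(3) by auto
    have fwd: "graph_iso n E (TK n r)" if eq: "lambda_G n E = lambda_G n (TK n r)"
    proof -
      have "lambda_G n E = l" using eq leE lowTK by linarith
      with cw obtain M where M: "M \<noteq> {}" "M \<subseteq> {0..<n}"
        "\<forall>i\<in>M. (\<Sum>j\<in>nbr n (Hedges P Q K ow) i. ?y j) = l * ?y i \<and>
          nbr n (Hedges P Q K ow) i \<subseteq> M \<and> nbr n (Hedges P Q K ow) i \<subseteq> nbr n E i" by blast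
      have clo: "nbr n (Hedges P Q K ow) i \<subseteq> M" if "i \<in> M" for i using M(3) that by blast
      obtain i where iM: "i \<in> M" using M(1) by blast
      have "\<exists>j\<in>M. j \<in> P \<union> Q"
      proof -
        have "i \<in> P \<union> Q \<union> K" using iM M(2) hp(4) by auto
        thus ?thesis
        proof (elim UnE)
          assume iK: "i \<in> K"
          have "ow i \<in> nbr n (Hedges P Q K ow) i" unfolding nbr_K[OF H iK] by simp
          hence "ow i \<in> M" using clo iM by blast
          thus ?thesis using hp(5)[OF iK] by blast
        qed (use iM in blast)+
      qed
      then obtain j where jM: "j \<in> M" and jPQ: "j \<in> P \<union> Q" by blast
      have PQM: "P \<union> Q \<subseteq> M"
      proof (cases "j \<in> P")
        case True
        have QM: "Q \<subseteq> M" using clo[OF jM] unfolding nbr_P[OF H True] by blast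
        obtain q0 where q0: "q0 \<in> Q" using Pne by blast
        have "P \<subseteq> M" using clo[of q0] QM q0 unfolding nbr_Q[OF H q0] by blast
        thus ?thesis using QM by blast
      next
        case False
        hence jQ: "j \<in> Q" using jPQ by blast
        have PM: "P \<subseteq> M" using clo[OF jM] unfolding nbr_Q[OF H jQ] by blast
        obtain p0 where p0: "p0 \<in> P" using Pne by blast
        have "Q \<subseteq> M" using clo[of p0] PM p0 unfolding nbr_P[OF H p0] by blast
        thus ?thesis using PM by blast
      qed
      have KM: "K \<subseteq> M"
      proof
        fix c assume c: "c \<in> K"
        have oc: "ow c \<in> P \<union> Q" using hp(5)[OF c] .
        have cC: "c \<in> Cl K ow (ow c)" unfolding Cl_def using c by simp
        have "c \<in> nbr n (Hedges P Q K ow) (ow c)"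
        proof (cases "ow c \<in> P")
          case True show ?thesis unfolding nbr_P[OF H True] using cC by simp
        next
          case False hence "ow c \<in> Q" using oc by simp
          show ?thesis unfolding nbr_Q[OF H \<open>ow c \<in> Q\<close>] using cC by simp
        qed
        moreover have "ow c \<in> M" using oc PQM by blast
        ultimately show "c \<in> M" using clo by blast
      qed
      have allM: "{0..<n} \<subseteq> M" using PQM KM hp(4) by blast
      have HE: "Hedges P Q K ow \<subseteq> E"
      proof
        fix e assume e: "e \<in> Hedges P Q K ow"
        then obtain x y where xy: "e = {x,y}" "x < n" "y < n" using Hedges_nbr[OF H e] by blast
        have "y \<in> nbr n (Hedges P Q K ow) x" unfolding nbr_def using xy e by simp
        moreover have "x \<in> M" using allM xy by auto
        ultimately have "y \<in> nbr n E x" using M(3) by blast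
        thus "e \<in> E" unfolding nbr_def xy(1) by simp
      qed
      have EH: "E = Hedges P Q K ow" using HE sub by blast
      from shape show ?thesis
      proof (elim disjE conjE)
        assume TQ0: "TQ = 0" and EPt: "EP = ee l t" and cPa: "card P = a" and cQb: "card Q = b"
        have TPt: "TP = t" using TQ0 TPQ by simp
        hence "EP = ee l TP" using EPt by simp
        hence "TP = 0 \<or> (\<exists>v\<in>P. tt K ow v = TP)" using sP by blast
        hence "\<exists>v\<in>P. tt K ow v = t" using TPt t1 by simp
        then obtain v where v: "v \<in> P" "tt K ow v = t" by blast
        have "Cl K ow v = K"
        proof (rule card_subset_eq)
          show "finite K" using fin by simp
          show "Cl K ow v \<subseteq> K" unfolding Cl_def by auto
          show "card (Cl K ow v) = card K" using v(2) cKt unfolding tt_def by simp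
        qed
        hence cv: "\<forall>c\<in>K. ow c = v" unfolding Cl_def by blast
        have cv0: "\<forall>c\<in>K0. o0 c = 0" unfolding o0_def by simp
        have "graph_iso n (Hedges P Q K ow) (Hedges P0 Q0 K0 o0)"
          by (rule iso_const[OF H H0 v(1) zP0 cv cv0]) (use cPa cP0 cQb cQ0 cKt cK0 in auto)
        thus ?thesis unfolding EH TKH .
      next
        assume TP0: "TP = 0" and EQt: "EQ = ee l t" and cQa: "card Q = a" and cPb: "card P = b"
        have TQt: "TQ = t" using TP0 TPQ by simp
        hence "EQ = ee l TQ" using EQt by simp
        hence "TQ = 0 \<or> (\<exists>v\<in>Q. tt K ow v = TQ)" using sQ by blast
        hence "\<exists>v\<in>Q. tt K ow v = t" using TQt t1 by simp
        then obtain v where v: "v \<in> Q" "tt K ow v = t" by blast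
        have "Cl K ow v = K"
        proof (rule card_subset_eq)
          show "finite K" using fin by simp
          show "Cl K ow v \<subseteq> K" unfolding Cl_def by auto
          show "card (Cl K ow v) = card K" using v(2) cKt unfolding tt_def by simp
        qed
        hence cv: "\<forall>c\<in>K. ow c = v" unfolding Cl_def by blast
        have cv0: "\<forall>c\<in>K0. o0 c = 0" unfolding o0_def by simp
        have "graph_iso n (Hedges Q P K ow) (Hedges P0 Q0 K0 o0)"
          by (rule iso_const[OF Hstruct_swap[OF H] H0 v(1) zP0 cv cv0]) (use cQa cP0 cPb cQ0 cKt cK0 in auto)
        moreover have hsw: "Hedges Q P K ow = Hedges P Q K ow" by (rule Hedges_swap)
        ultimately have "graph_iso n (Hedges P Q K ow) (Hedges P0 Q0 K0 o0)" by simp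
        thus ?thesis unfolding EH TKH .
      qed
    qed
    have "lambda_G n E \<le> lambda_G n (TK n r)" using leE lowTK by linarith
    moreover have "lambda_G n E = lambda_G n (TK n r)" if "graph_iso n E (TK n r)"
      using isoR[OF that] \<open>lambda_G n E \<le> lambda_G n (TK n r)\<close> by linarith
    ultimately show ?thesis using fwd by blast
  qed
qed


end
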